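(* Let $(E,M_E)$ be a Lie $\infty$-algebra with brackets $\{l_k\}_{k\ge1}$. For $x\in S^i(E)$, $i\ge1$, let $\mathrm{ad}^D_x$ be the coderivation of $\bar S(E)$ of degree $|x|+1$ determined by the maps $S^k(E)\to E$, $e\mapsto l_{i+k}(x,e)$, $k\ge1$. Then the degree $+1$ linear map $\mathbf{ad}:\bar S(E)\to\mathrm{Coder}(\bar S(E))$, $x\mapsto\mathrm{ad}^D_x$, is a Lie $\infty$-morphism from $(E,M_E)$ to the symmetric DGLA $(\mathrm{Coder}(\bar S(E))[1],\partial_{M_E},[\cdot,\cdot])$; i.e. for all $x\in\bar S(E)$, $\mathrm{ad}^D_{M_E(x)}=\partial_{M_E}\mathrm{ad}^D_x+\tfrac12[\mathrm{ad}^D_{x_{(1)}},\mathrm{ad}^D_{x_{(2)}}]$ (last term $0$ for $x\in E$). In other words, $\mathbf{ad}$ is an action of $E$ on itself.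
   Context: All graded vector spaces are $\mathbb Z$-graded and finite dimensional over $\mathbb K=\mathbb R$ or $\mathbb C$, with Koszul sign conventions. $\bar S(E)=\bigoplus_{k\ge1}S^k(E)$ is the reduced graded symmetric coalgebra with the unshuffle coproduct $\Delta$; Sweedler notation $\Delta(x)=x_{(1)}\otimes x_{(2)}$. Coderivations of $\bar S(E)$ of degree $k$ are uniquely determined by their composite with the projection $p_E:\bar S(E)\to E$, via $Q(x)=q(x_{(1)})\odot x_{(2)}+q(x)$. A (symmetric) Lie $\infty$-algebra $(E,M_E)$ is a degree $+1$ coderivation $M_E$ of $\bar S(E)$ with $M_E^2=0$; its brackets are $l_k=p_E\circ M_E|_{S^k(E)}$, and $l_k(x,e)$ for $x\in S^i(E),e\in S^{k}(E)$ means $l_{i+k}$ applied to $x\odot e$. $\mathrm{Coder}(\bar S(E))[1]$ is the symmetric DGLA with $\partial_{M_E}Q=-M_E\circ Q+(-1)^{\deg Q}Q\circ M_E$ and $[Q,P]=(-1)^{\deg Q}(Q\circ P-(-1)^{\deg Q\deg P}P\circ Q)$ ($\deg$ = degree as a map). *)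

theory Defs
  imports Complex_Main
begin

text \<open>
E is finite dimensional and Z-graded with homogeneous basis
e_0,...,e_{n-1}, where e_j has degree d j.  A word w = [i_1,...,i_k] (list of basis
indices) stands for e_{i_1} \<odot> ... \<odot> e_{i_k} in S^k(E).  The canonical basis of
the reduced symmetric coalgebra consists of the valid words: nonempty, sorted,
indices below n, no odd-degree index repeated.  Elements of S(E) are coefficient
functions  nat list \<Rightarrow> 'a  (supported on canonical monomials); elements of E are
coefficient functions  nat \<Rightarrow> 'a.  Linear maps of S-bar(E) are given by their values
on words:  nat list \<Rightarrow> (nat list \<Rightarrow> 'a).
\<close>

definition ksgn :: "int \<Rightarrow> 'a::comm_ring_1" where
  "ksgn k = (if even k then 1 else -1)"

text \<open>Koszul sign of swapping e_i and e_j.\<close>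
definition kpair :: "(nat \<Rightarrow> int) \<Rightarrow> nat \<Rightarrow> nat \<Rightarrow> 'a::comm_ring_1" where
  "kpair d i j = ksgn (d i * d j)"

definition wdeg :: "(nat \<Rightarrow> int) \<Rightarrow> nat list \<Rightarrow> int" where
  "wdeg d w = sum_list (map d w)"

definition odd_rep :: "(nat \<Rightarrow> int) \<Rightarrow> nat list \<Rightarrow> bool" where
  "odd_rep d w = (\<exists>a b. a < b \<and> b < length w \<and> w!a = w!b \<and> odd (d (w!a)))"

definition valid :: "nat \<Rightarrow> (nat \<Rightarrow> int) \<Rightarrow> nat list \<Rightarrow> bool" where
  "valid n d w = (w \<noteq> [] \<and> sorted w \<and> set w \<subseteq> {..<n} \<and> \<not> odd_rep d w)"

text \<open>Koszul sign of (stably) sorting a word.\<close>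
definition ksort_sign :: "(nat \<Rightarrow> int) \<Rightarrow> nat list \<Rightarrow> 'a::comm_ring_1" where
  "ksort_sign d w = (\<Prod>(a,b)\<in>{(a,b). a < b \<and> b < length w \<and> w!a > w!b}. kpair d (w!a) (w!b))"

text \<open>The element e_{i_1} \<odot> ... \<odot> e_{i_k} of S(E) in canonical coordinates.\<close>
definition mono :: "(nat \<Rightarrow> int) \<Rightarrow> nat list \<Rightarrow> nat list \<Rightarrow> 'a::comm_ring_1" where
  "mono d w = (\<lambda>m. if odd_rep d w \<or> m \<noteq> sort w then 0 else ksort_sign d w)"

text \<open>Koszul sign of the unshuffle moving the letters at positions I to the front.\<close>
definition unsh_sign :: "(nat \<Rightarrow> int) \<Rightarrow> nat list \<Rightarrow> nat set \<Rightarrow> 'a::comm_ring_1" where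
  "unsh_sign d w I = (\<Prod>(a,b)\<in>{(a,b). a < b \<and> b < length w \<and> a \<notin> I \<and> b \<in> I}. kpair d (w!a) (w!b))"

text \<open>v \<odot> u for v in E and a word u.\<close>
definition vprod :: "nat \<Rightarrow> (nat \<Rightarrow> int) \<Rightarrow> (nat \<Rightarrow> 'a::comm_ring_1) \<Rightarrow> nat list \<Rightarrow> nat list \<Rightarrow> 'a" where
  "vprod n d v u = (\<lambda>m. \<Sum>j<n. v j * mono d (j # u) m)"

text \<open>Coderivation Q determined by q (given on words):
  Q(x) = q(x_(1)) \<odot> x_(2) + q(x), via the unshuffle coproduct.\<close>
definition coder :: "nat \<Rightarrow> (nat \<Rightarrow> int) \<Rightarrow> (nat list \<Rightarrow> nat \<Rightarrow> 'a::comm_ring_1) \<Rightarrow> nat list \<Rightarrow> nat list \<Rightarrow> 'a" where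
  "coder n d q w = (\<lambda>m. \<Sum>I\<in>{I. I \<subseteq> {..<length w} \<and> I \<noteq> {}}.
       unsh_sign d w I * vprod n d (q (nths w I)) (nths w (- I)) m)"

definition lin :: "(nat list \<Rightarrow> nat list \<Rightarrow> 'a::comm_ring_1) \<Rightarrow> (nat list \<Rightarrow> 'a) \<Rightarrow> nat list \<Rightarrow> 'a" where
  "lin F X = (\<lambda>m'. \<Sum>m\<in>{m. X m \<noteq> 0}. X m * F m m')"

definition comp :: "(nat list \<Rightarrow> nat list \<Rightarrow> 'a::comm_ring_1) \<Rightarrow> (nat list \<Rightarrow> nat list \<Rightarrow> 'a) \<Rightarrow> nat list \<Rightarrow> nat list \<Rightarrow> 'a" where
  "comp F G = (\<lambda>w. lin F (G w))"

text \<open>Extension of the brackets (given on canonical monomials) to all words,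
  by graded symmetry.\<close>
definition wext :: "(nat \<Rightarrow> int) \<Rightarrow> (nat list \<Rightarrow> nat \<Rightarrow> 'a::comm_ring_1) \<Rightarrow> nat list \<Rightarrow> nat \<Rightarrow> 'a" where
  "wext d l w = (if odd_rep d w then (\<lambda>j. 0) else (\<lambda>j. ksort_sign d w * l (sort w) j))"

text \<open>M_E: the coderivation determined by the brackets l (l w = l_k(e_w)).\<close>
definition MapM :: "nat \<Rightarrow> (nat \<Rightarrow> int) \<Rightarrow> (nat list \<Rightarrow> nat \<Rightarrow> 'a::comm_ring_1) \<Rightarrow> nat list \<Rightarrow> nat list \<Rightarrow> 'a" where
  "MapM n d l = coder n d (wext d l)"

definition lie_infty :: "nat \<Rightarrow> (nat \<Rightarrow> int) \<Rightarrow> (nat list \<Rightarrow> nat \<Rightarrow> 'a::comm_ring_1) \<Rightarrow> bool" where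
  "lie_infty n d l \<longleftrightarrow>
     (\<forall>w. valid n d w \<longrightarrow> (\<forall>j. l w j \<noteq> 0 \<longrightarrow> j < n \<and> d j = wdeg d w + 1)) \<and>
     (\<forall>w. valid n d w \<longrightarrow> comp (MapM n d l) (MapM n d l) w = (\<lambda>_. 0))"

definition adD :: "nat \<Rightarrow> (nat \<Rightarrow> int) \<Rightarrow> (nat list \<Rightarrow> nat \<Rightarrow> 'a::comm_ring_1) \<Rightarrow> nat list \<Rightarrow> nat list \<Rightarrow> nat list \<Rightarrow> 'a" where
  "adD n d l x = coder n d (\<lambda>e. wext d l (x @ e))"

definition adD_el :: "nat \<Rightarrow> (nat \<Rightarrow> int) \<Rightarrow> (nat list \<Rightarrow> nat \<Rightarrow> 'a::comm_ring_1) \<Rightarrow> (nat list \<Rightarrow> 'a) \<Rightarrow> nat list \<Rightarrow> nat list \<Rightarrow> 'a" where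
  "adD_el n d l X = (\<lambda>y m. \<Sum>u\<in>{u. X u \<noteq> 0}. X u * adD n d l u y m)"

definition dM :: "nat \<Rightarrow> (nat \<Rightarrow> int) \<Rightarrow> (nat list \<Rightarrow> nat \<Rightarrow> 'a::comm_ring_1) \<Rightarrow> (nat list \<Rightarrow> nat list \<Rightarrow> 'a) \<Rightarrow> int \<Rightarrow> nat list \<Rightarrow> nat list \<Rightarrow> 'a" where
  "dM n d l Q p = (\<lambda>y m. - comp (MapM n d l) Q y m + ksgn p * comp Q (MapM n d l) y m)"

definition cbr :: "(nat list \<Rightarrow> nat list \<Rightarrow> 'a::comm_ring_1) \<Rightarrow> int \<Rightarrow> (nat list \<Rightarrow> nat list \<Rightarrow> 'a) \<Rightarrow> int \<Rightarrow> nat list \<Rightarrow> nat list \<Rightarrow> 'a" where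
  "cbr Q p P r = (\<lambda>y m. ksgn p * (comp Q P y m - ksgn (p * r) * comp P Q y m))"

end

theory Submission
  imports Defs "HOL-Library.Multiset"
begin


section \<open>Signs\<close>

lemma ksgn_add: "(ksgn (a + b) :: 'a::comm_ring_1) = ksgn a * ksgn b"
  by (auto simp: ksgn_def)

lemma ksgn_cong: "even (a - b) \<Longrightarrow> (ksgn a :: 'a::comm_ring_1) = ksgn b"
  unfolding ksgn_def by (metis even_add diff_add_cancel)

lemma ksgn_sq: "(ksgn a :: 'a::comm_ring_1) * ksgn a = 1"
  by (auto simp: ksgn_def)

lemma ksgn_0[simp]: "ksgn 0 = 1" by (simp add: ksgn_def)

lemma ksgn_ne0[simp]: "(ksgn a :: 'a::{comm_ring_1,ring_char_0}) \<noteq> 0"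
  by (auto simp: ksgn_def)

lemma wdeg_Nil[simp]: "wdeg d [] = 0" and wdeg_Cons[simp]: "wdeg d (a#w) = d a + wdeg d w"
  and wdeg_append[simp]: "wdeg d (u @ v) = wdeg d u + wdeg d v"
  by (auto simp: wdeg_def)

lemma pairs_Suc:
  "(\<Prod>(a,b)\<in>{(a,b). a<b \<and> b<Suc k \<and> R a b}. f a b :: 'a::comm_monoid_mult) =
   (\<Prod>b\<in>{b. b<k \<and> R 0 (Suc b)}. f 0 (Suc b)) *
   (\<Prod>(a,b)\<in>{(a,b). a<b \<and> b<k \<and> R (Suc a) (Suc b)}. f (Suc a) (Suc b))"
proof -
  have eq: "{(a,b). a<b \<and> b<Suc k \<and> R a b} =
     (\<lambda>b. (0, Suc b)) ` {b. b<k \<and> R 0 (Suc b)} \<union>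
     map_prod Suc Suc ` {(a,b). a<b \<and> b<k \<and> R (Suc a) (Suc b)}"
  proof (rule set_eqI, clarify)
    fix a b
    show "((a,b) \<in> {(a,b). a<b \<and> b<Suc k \<and> R a b}) =
      ((a,b) \<in> (\<lambda>b. (0, Suc b)) ` {b. b<k \<and> R 0 (Suc b)} \<union>
     map_prod Suc Suc ` {(a,b). a<b \<and> b<k \<and> R (Suc a) (Suc b)})"
      by (cases a; cases b) (auto simp: image_iff)
  qed
  have fin1: "finite ((\<lambda>b. (0::nat, Suc b)) ` {b. b<k \<and> R 0 (Suc b)})" by auto
  have fin2: "finite (map_prod Suc Suc ` {(a,b). a<b \<and> b<k \<and> R (Suc a) (Suc b)})"
    by (rule finite_imageI, rule finite_subset[of _ "{..<k} \<times> {..<k}"]) auto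
  show ?thesis
    unfolding eq
    apply (subst prod.union_disjoint[OF fin1 fin2])
     apply force
    apply (subst prod.reindex, simp add: inj_on_def)
    apply (subst prod.reindex, simp add: inj_on_def)
    apply (simp add: case_prod_beta comp_def)
    done
qed

lemma prod_kpair_filter0:
  "(\<Prod>b\<in>{b. b < length w \<and> P (w!b)}. ksgn (d a * d (w!b)) :: 'a::comm_ring_1) = ksgn (d a * wdeg d (filter P w))"
proof (induction w)
  case Nil then show ?case by simp
next
  case (Cons c w)
  have eq: "{b. b < length (c#w) \<and> P ((c#w)!b)} = (if P c then {0} else {}) \<union> Suc ` {b. b < length w \<and> P (w!b)}"
  proof (rule set_eqI)
    fix b show "b \<in> {b. b < length (c#w) \<and> P ((c#w)!b)} \<longleftrightarrow> b \<in> (if P c then {0} else {}) \<union> Suc ` {b. b < length w \<and> P (w!b)}"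
      by (cases b) auto
  qed
  show ?case
    unfolding eq
    apply (subst prod.union_disjoint, auto simp: prod.reindex Cons.IH[symmetric])
    apply (simp_all add: comp_def Cons.IH ksgn_add[symmetric] algebra_simps)
    done
qed

lemma prod_kpair_filter:
  "(\<Prod>b\<in>{b. b < length w \<and> P (w!b)}. kpair d a (w!b) :: 'a::comm_ring_1) = ksgn (d a * wdeg d (filter P w))"
  unfolding kpair_def by (rule prod_kpair_filter0)

lemma ksort_sign_Nil[simp]: "ksort_sign d [] = 1"
  by (simp add: ksort_sign_def)

lemma ksort_sign_Cons: "ksort_sign d (a#w) = ksgn (d a * wdeg d (filter (\<lambda>c. c < a) w)) * ksort_sign d w"
proof -
  have "ksort_sign d (a#w) = (\<Prod>b\<in>{b. b<length w \<and> a > w!b}. kpair d a (w!b)) * ksort_sign d w"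
    unfolding ksort_sign_def length_Cons
    by (subst pairs_Suc[where R = "\<lambda>i j. (a#w)!i > (a#w)!j"]) simp
  also have "(\<Prod>b\<in>{b. b<length w \<and> a > w!b}. kpair d a (w!b)) = ksgn (d a * wdeg d (filter (\<lambda>c. c < a) w))"
    using prod_kpair_filter[where w=w and P="\<lambda>c. c < a" and d=d and a=a] by simp
  finally show ?thesis .
qed

lemma odd_rep_Nil[simp]: "\<not> odd_rep d []" by (simp add: odd_rep_def)

lemma odd_rep_Cons: "odd_rep d (a#w) = ((odd (d a) \<and> a \<in> set w) \<or> odd_rep d w)"
proof
  assume "odd_rep d (a#w)"
  then obtain i j where ij: "i<j" "j < Suc (length w)" "(a#w)!i = (a#w)!j" "odd (d ((a#w)!i))"
    by (auto simp: odd_rep_def)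
  show "(odd (d a) \<and> a \<in> set w) \<or> odd_rep d w"
  proof (cases i)
    case 0 then show ?thesis using ij by (cases j) auto
  next
    case (Suc i') then obtain j' where "j = Suc j'" using ij by (cases j) auto
    then show ?thesis using ij Suc unfolding odd_rep_def by auto
  qed
next
  assume "(odd (d a) \<and> a \<in> set w) \<or> odd_rep d w"
  then show "odd_rep d (a#w)"
  proof
    assume "odd (d a) \<and> a \<in> set w"
    then obtain j where "j < length w" "w!j = a" by (auto simp: in_set_conv_nth)
    then show ?thesis unfolding odd_rep_def using \<open>odd (d a) \<and> a \<in> set w\<close>
      by (intro exI[of _ 0] exI[of _ "Suc j"]) auto
  next
    assume "odd_rep d w"
    then obtain i j where "i<j" "j<length w" "w!i = w!j" "odd (d (w!i))" by (auto simp: odd_rep_def)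
    then show ?thesis unfolding odd_rep_def by (intro exI[of _ "Suc i"] exI[of _ "Suc j"]) auto
  qed
qed


section \<open>Masks\<close>

fun selm :: "bool list \<Rightarrow> 'x list \<Rightarrow> 'x list" where
  "selm (b#bs) (x#xs) = (if b then x # selm bs xs else selm bs xs)"
| "selm _ _ = []"

definition rejm :: "bool list \<Rightarrow> 'x list \<Rightarrow> 'x list" where
  "rejm bs xs = selm (map Not bs) xs"

lemma rejm_simps[simp]: "rejm (b#bs) (x#xs) = (if b then rejm bs xs else x # rejm bs xs)"
  "rejm [] xs = []" "rejm bs [] = []"
  by (auto simp: rejm_def)

lemma selm_Nil2[simp]: "selm bs [] = []" by (cases bs) auto

fun epsm :: "(nat \<Rightarrow> int) \<Rightarrow> bool list \<Rightarrow> nat list \<Rightarrow> 'a::comm_ring_1" where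
  "epsm d (b#bs) (x#xs) = (if b then 1 else ksgn (d x * wdeg d (selm bs xs))) * epsm d bs xs"
| "epsm d _ _ = 1"

definition masks :: "nat \<Rightarrow> bool list set" where
  "masks k = {ms. length ms = k}"

definition tmasks :: "nat \<Rightarrow> bool list set" where
  "tmasks k = {ms. length ms = k \<and> True \<in> set ms}"

lemma finite_masks[simp]: "finite (masks k)"
proof -
  have "masks k \<subseteq> {xs. set xs \<subseteq> UNIV \<and> length xs = k}" by (auto simp: masks_def)
  then show ?thesis using finite_lists_length_eq[of "UNIV::bool set" k] finite_subset by auto
qed

lemma finite_tmasks[simp]: "finite (tmasks k)"
  by (rule finite_subset[OF _ finite_masks[of k]]) (auto simp: tmasks_def masks_def)

lemma masks_0: "masks 0 = {[]}" by (auto simp: masks_def)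
lemma tmasks_0: "tmasks 0 = {}" by (auto simp: tmasks_def)

lemma masks_Suc: "masks (Suc k) = (Cons True) ` masks k \<union> (Cons False) ` masks k"
  by (auto simp: masks_def image_iff length_Suc_conv)

lemma tmasks_Suc: "tmasks (Suc k) = (Cons True) ` masks k \<union> (Cons False) ` tmasks k"
  by (auto simp: masks_def tmasks_def image_iff length_Suc_conv)

lemma sum_masks_Suc: "(\<Sum>ms\<in>masks (Suc k). f ms) = (\<Sum>ms\<in>masks k. f (True#ms)) + (\<Sum>ms\<in>masks k. f (False#ms))"
  unfolding masks_Suc
  by (subst sum.union_disjoint) (auto simp: sum.reindex)

lemma sum_tmasks_Suc: "(\<Sum>ms\<in>tmasks (Suc k). f ms) = (\<Sum>ms\<in>masks k. f (True#ms)) + (\<Sum>ms\<in>tmasks k. f (False#ms))"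
  unfolding tmasks_Suc
  by (subst sum.union_disjoint) (auto simp: sum.reindex)

lemma sum_masks_0: "(\<Sum>ms\<in>masks 0. f ms) = f []" by (simp add: masks_0)
lemma sum_tmasks_0: "(\<Sum>ms\<in>tmasks 0. f ms) = 0" by (simp add: tmasks_0)

lemma prod_kpair_mask:
  "length ms = length w \<Longrightarrow> (\<Prod>b\<in>{b. b < length w \<and> ms!b}. kpair d a (w!b) :: 'a::comm_ring_1) = ksgn (d a * wdeg d (selm ms w))"
proof (induction w arbitrary: ms)
  case Nil then show ?case by simp
next
  case (Cons c w)
  then obtain b ms' where ms: "ms = b # ms'" "length ms' = length w" by (cases ms) auto
  have eq: "{i. i < length (c#w) \<and> ms!i} = (if b then {0} else {}) \<union> Suc ` {i. i < length w \<and> ms'!i}"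
  proof (rule set_eqI)
    fix i show "i \<in> {i. i < length (c#w) \<and> ms!i} \<longleftrightarrow> i \<in> (if b then {0} else {}) \<union> Suc ` {i. i < length w \<and> ms'!i}"
      using ms by (cases i) auto
  qed
  show ?case
    unfolding eq using ms Cons.IH[OF ms(2)]
    by (subst prod.union_disjoint) (auto simp: prod.reindex kpair_def ksgn_add[symmetric] algebra_simps)
qed

definition setm :: "bool list \<Rightarrow> nat set" where
  "setm ms = {i. i < length ms \<and> ms!i}"

lemma setm_Cons: "setm (b#ms) = (if b then {0} else {}) \<union> Suc ` setm ms"
proof (rule set_eqI)
  fix i show "i \<in> setm (b#ms) \<longleftrightarrow> i \<in> (if b then {0} else {}) \<union> Suc ` setm ms"
    by (cases i) (auto simp: setm_def)
qed

lemma nths_setm: "length ms = length w \<Longrightarrow> nths w (setm ms) = selm ms w \<and> nths w (- setm ms) = rejm ms w"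
proof (induction w arbitrary: ms)
  case Nil then show ?case by simp
next
  case (Cons c w)
  then obtain b ms' where ms: "ms = b # ms'" "length ms' = length w" by (cases ms) auto
  have e1: "{j. Suc j \<in> setm (b#ms')} = setm ms'" by (auto simp: setm_Cons)
  have e2: "{j. Suc j \<in> - setm (b#ms')} = - setm ms'" by (auto simp: setm_Cons)
  show ?case using Cons.IH[OF ms(2)] ms
    by (simp add: nths_Cons e1 e2 setm_Cons inj_image_mem_iff Collect_neg_eq)
qed

lemma unsh_sign_setm: "length ms = length w \<Longrightarrow> (unsh_sign d w (setm ms) :: 'a::comm_ring_1) = epsm d ms w"
proof (induction w arbitrary: ms)
  case Nil then show ?case by (simp add: unsh_sign_def)
next
  case (Cons c w)
  then obtain b ms' where ms: "ms = b # ms'" "length ms' = length w" by (cases ms) auto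
  have "(unsh_sign d (c#w) (setm ms) :: 'a) =
     (\<Prod>j\<in>{j. j<length w \<and> 0 \<notin> setm ms \<and> Suc j \<in> setm ms}. kpair d c (w!j)) * unsh_sign d w (setm ms')"
    unfolding unsh_sign_def length_Cons
    by (subst pairs_Suc[where R="\<lambda>i j. i \<notin> setm ms \<and> j \<in> setm ms"]) (simp add: ms setm_Cons image_iff)
  also have "(\<Prod>j\<in>{j. j<length w \<and> 0 \<notin> setm ms \<and> Suc j \<in> setm ms}. kpair d c (w!j)) =
      (if b then 1 else ksgn (d c * wdeg d (selm ms' w)))"
  proof (cases b)
    case True then show ?thesis by (simp add: ms setm_Cons)
  next
    case False
    have "{j. j<length w \<and> 0 \<notin> setm ms \<and> Suc j \<in> setm ms} = {j. j < length w \<and> ms'!j}"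
      using False ms by (auto simp: setm_Cons setm_def)
    then show ?thesis using False prod_kpair_mask[OF ms(2), of d c] by simp
  qed
  finally have X: "(unsh_sign d (c#w) (setm ms) :: 'a) = (if b then 1 else ksgn (d c * wdeg d (selm ms' w))) * epsm d ms' w"
    unfolding Cons.IH[OF ms(2)] .
  show ?case unfolding X using ms by simp
qed

lemma setm_inj: "length ms = k \<Longrightarrow> length ms' = k \<Longrightarrow> setm ms = setm ms' \<Longrightarrow> ms = ms'"
proof (rule nth_equalityI)
  assume a: "length ms = k" "length ms' = k" "setm ms = setm ms'"
  show "length ms = length ms'" using a by simp
  fix i assume "i < length ms"
  then show "ms!i = ms'!i" using a unfolding setm_def by (auto simp: set_eq_iff)
qed

definition mkm :: "nat \<Rightarrow> nat set \<Rightarrow> bool list" where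
  "mkm k I = map (\<lambda>i. i \<in> I) [0..<k]"

lemma setm_mkm: "I \<subseteq> {..<k} \<Longrightarrow> setm (mkm k I) = I"
  unfolding setm_def mkm_def by auto

lemma mkm_setm: "mkm (length ms) (setm ms) = ms"
  unfolding setm_def mkm_def by (rule nth_equalityI) auto

lemma setm_sub: "setm ms \<subseteq> {..<length ms}" unfolding setm_def by auto

lemma setm_empty: "(setm ms = {}) = (True \<notin> set ms)"
  unfolding setm_def by (auto simp: in_set_conv_nth)

lemma setm_full: "(setm ms = {..<length ms}) = (False \<notin> set ms)"
proof
  assume a: "setm ms = {..<length ms}"
  show "False \<notin> set ms"
  proof
    assume "False \<in> set ms"
    then obtain i where "i < length ms" "ms!i = False" by (auto simp: in_set_conv_nth)
    then have "i \<notin> setm ms" by (simp add: setm_def)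
    with a \<open>i < length ms\<close> show False by auto
  qed
next
  assume a: "False \<notin> set ms"
  have "ms!i" if "i < length ms" for i using a that by (metis (full_types) nth_mem)
  then show "setm ms = {..<length ms}" by (auto simp: setm_def)
qed

lemma sum_subsets_masks:
  "(\<Sum>I\<in>{I. I \<subseteq> {..<length w} \<and> Q I}. F I) = (\<Sum>ms\<in>{ms. length ms = length w \<and> Q (setm ms)}. F (setm ms))"
  apply (rule sum.reindex_bij_witness[where i=setm and j="mkm (length w)"])
  apply (auto simp: setm_mkm setm_sub)
    apply (simp add: mkm_def)
   apply (metis mkm_setm)
  using setm_sub by fastforce


section \<open>Recursive split sums\<close>

fun ms2 :: "(nat \<Rightarrow> int) \<Rightarrow> (nat list \<Rightarrow> nat list \<Rightarrow> 'a::comm_ring_1) \<Rightarrow> nat list \<Rightarrow> 'a" where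
  "ms2 d F [] = F [] []"
| "ms2 d F (c#w) = ms2 d (\<lambda>s r. F (c#s) r + ksgn (d c * wdeg d s) * F s (c#r)) w"

fun ms3 :: "(nat \<Rightarrow> int) \<Rightarrow> (nat list \<Rightarrow> nat list \<Rightarrow> nat list \<Rightarrow> 'a::comm_ring_1) \<Rightarrow> nat list \<Rightarrow> 'a" where
  "ms3 d F [] = F [] [] []"
| "ms3 d F (c#w) = ms3 d (\<lambda>a b e. F (c#a) b e + ksgn (d c * wdeg d a) * F a (c#b) e
        + ksgn (d c * (wdeg d a + wdeg d b)) * F a b (c#e)) w"

lemma ms2_masks: "ms2 d F w = (\<Sum>ms\<in>masks (length w). epsm d ms w * F (selm ms w) (rejm ms w))"
proof (induction w arbitrary: F)
  case Nil then show ?case by (simp add: masks_0)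
next
  case (Cons c w)
  show ?case
    by (simp add: Cons sum_masks_Suc sum.distrib algebra_simps)
qed

lemma ms2_cong: "(\<And>s r. set s \<subseteq> set w \<Longrightarrow> set r \<subseteq> set w \<Longrightarrow> F s r = G s r) \<Longrightarrow> ms2 d F w = ms2 d G w"
proof (induction w arbitrary: F G)
  case Nil then show ?case by simp
next
  case (Cons c w)
  show ?case unfolding ms2.simps
  proof (rule Cons.IH)
    fix s r assume "set s \<subseteq> set w" "set r \<subseteq> set w"
    then show "F (c#s) r + ksgn (d c * wdeg d s) * F s (c#r) = G (c#s) r + ksgn (d c * wdeg d s) * G s (c#r)"
      using Cons.prems[of "c#s" r] Cons.prems[of s "c#r"] by (simp add: subset_insertI2)
  qed
qed

lemma ms3_cong: "(\<And>a b e. set a \<subseteq> set w \<Longrightarrow> set b \<subseteq> set w \<Longrightarrow> set e \<subseteq> set w \<Longrightarrow> F a b e = G a b e) \<Longrightarrow> ms3 d F w = ms3 d G w"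
proof (induction w arbitrary: F G)
  case Nil then show ?case by simp
next
  case (Cons c w)
  show ?case unfolding ms3.simps
  proof (rule Cons.IH)
    fix a b e assume "set a \<subseteq> set w" "set b \<subseteq> set w" "set e \<subseteq> set w"
    then show "F (c#a) b e + ksgn (d c * wdeg d a) * F a (c#b) e + ksgn (d c * (wdeg d a + wdeg d b)) * F a b (c#e) =
      G (c#a) b e + ksgn (d c * wdeg d a) * G a (c#b) e + ksgn (d c * (wdeg d a + wdeg d b)) * G a b (c#e)"
      using Cons.prems[of "c#a" b e] Cons.prems[of a "c#b" e] Cons.prems[of a b "c#e"] by (simp add: subset_insertI2)
  qed
qed

lemma ms2_add: "ms2 d (\<lambda>s r. F s r + G s r) w = ms2 d F w + ms2 d G w"
  by (induction w arbitrary: F G) (simp_all add: algebra_simps)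

lemma ms2_scale: "ms2 d (\<lambda>s r. c * F s r) w = c * ms2 d F w"
proof (induction w arbitrary: F)
  case Nil then show ?case by simp
next
  case (Cons a w)
  have "ms2 d (\<lambda>s r. c * F s r) (a#w) = ms2 d (\<lambda>s r. c * (F (a#s) r + ksgn (d a * wdeg d s) * F s (a#r))) w"
    by (simp add: distrib_left mult.left_commute)
  then show ?case using Cons.IH by simp
qed

lemma ms2_zero: "ms2 d (\<lambda>s r. 0) w = 0"
  by (induction w) simp_all

lemma ms2_diff: "ms2 d (\<lambda>s r. F s r - G s r) w = ms2 d F w - ms2 d G w"
  using ms2_add[of d F "\<lambda>s r. (-1) * G s r" w] ms2_scale[of d "-1" G w] by simp

lemma ms2_sum: "finite A \<Longrightarrow> ms2 d (\<lambda>s r. \<Sum>i\<in>A. F i s r) w = (\<Sum>i\<in>A. ms2 d (F i) w)"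
  by (induction A rule: finite_induct) (simp_all add: ms2_zero ms2_add)

lemma ms3_add: "ms3 d (\<lambda>a b e. F a b e + G a b e) w = ms3 d F w + ms3 d G w"
  by (induction w arbitrary: F G) (simp_all add: algebra_simps)

lemma ms3_scale: "ms3 d (\<lambda>a b e. c * F a b e) w = c * ms3 d F w"
proof (induction w arbitrary: F)
  case Nil then show ?case by simp
next
  case (Cons x w)
  have "ms3 d (\<lambda>a b e. c * F a b e) (x#w) = ms3 d (\<lambda>a b e. c * (F (x#a) b e + ksgn (d x * wdeg d a) * F a (x#b) e
        + ksgn (d x * (wdeg d a + wdeg d b)) * F a b (x#e))) w"
    by (simp add: distrib_left mult.left_commute)
  then show ?case using Cons.IH by simp
qed

lemma ms2_wdeg: "ms2 d (\<lambda>a b. g (wdeg d a + wdeg d b) * F a b) s = g (wdeg d s) * ms2 d F s"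
proof (induction s arbitrary: F g)
  case Nil then show ?case by simp
next
  case (Cons c s)
  have "ms2 d (\<lambda>a b. g (wdeg d a + wdeg d b) * F a b) (c#s) =
     ms2 d (\<lambda>a b. (\<lambda>t. g (d c + t)) (wdeg d a + wdeg d b) * (F (c#a) b + ksgn (d c * wdeg d a) * F a (c#b))) s"
    by (simp add: algebra_simps)
  also have "\<dots> = g (d c + wdeg d s) * ms2 d (\<lambda>a b. F (c#a) b + ksgn (d c * wdeg d a) * F a (c#b)) s"
    by (rule Cons.IH)
  finally show ?case by (simp only: ms2.simps wdeg_Cons)
qed

lemma ms2_lin2: "ms2 d F r + k * ms2 d G r = ms2 d (\<lambda>s r. F s r + k * G s r) r"
  by (simp add: ms2_add ms2_scale)

lemma ms2_nest1: "ms2 d (\<lambda>s r. ms2 d (\<lambda>s2 r2. F s s2 r2) r) w = ms3 d F w"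
proof (induction w arbitrary: F)
  case Nil then show ?case by simp
next
  case (Cons c w)
  have "ms2 d (\<lambda>s r. ms2 d (\<lambda>s2 r2. F s s2 r2) r) (c#w) =
    ms2 d (\<lambda>s r. ms2 d (\<lambda>s2 r2. F (c#s) s2 r2 + ksgn (d c * wdeg d s) * (F s (c#s2) r2
        + ksgn (d c * wdeg d s2) * F s s2 (c#r2))) r) w"
    by (simp only: ms2.simps ms2_lin2)
  also have "\<dots> = ms2 d (\<lambda>s r. ms2 d (\<lambda>s2 r2. F (c#s) s2 r2 + ksgn (d c * wdeg d s) * F s (c#s2) r2
        + ksgn (d c * (wdeg d s + wdeg d s2)) * F s s2 (c#r2)) r) w"
  proof (intro arg_cong[where f="\<lambda>F. ms2 d F w"] ext arg_cong[where f="\<lambda>F. ms2 d F r" for r])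
    fix s s2 r2
    have k: "(ksgn (d c * wdeg d s) :: 'a) * ksgn (d c * wdeg d s2) = ksgn (d c * (wdeg d s + wdeg d s2))"
      by (simp add: ksgn_add[symmetric] distrib_left)
    show "F (c#s) s2 r2 + ksgn (d c * wdeg d s) * (F s (c#s2) r2 + ksgn (d c * wdeg d s2) * F s s2 (c#r2)) =
       F (c#s) s2 r2 + ksgn (d c * wdeg d s) * F s (c#s2) r2 + ksgn (d c * (wdeg d s + wdeg d s2)) * F s s2 (c#r2)"
      by (simp only: distrib_left mult.assoc[symmetric] k add.assoc)
  qed
  also have "\<dots> = ms3 d (\<lambda>a b e. F (c#a) b e + ksgn (d c * wdeg d a) * F a (c#b) e
        + ksgn (d c * (wdeg d a + wdeg d b)) * F a b (c#e)) w"
    by (rule Cons.IH)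
  finally show ?case by (simp only: ms3.simps)
qed

lemma ms2_nest2: "ms2 d (\<lambda>s r. ms2 d (\<lambda>s1 s2. F s1 s2 r) s) w = ms3 d F w"
proof (induction w arbitrary: F)
  case Nil then show ?case by simp
next
  case (Cons c w)
  have e: "\<And>s r. ksgn (d c * wdeg d s) * ms2 d (\<lambda>s1 s2. F s1 s2 (c#r)) s =
      ms2 d (\<lambda>s1 s2. ksgn (d c * (wdeg d s1 + wdeg d s2)) * F s1 s2 (c#r)) s"
    by (rule ms2_wdeg[where g="\<lambda>t. ksgn (d c * t)" and F="\<lambda>s1 s2. F s1 s2 (c#r)" for r, symmetric])
  have "ms2 d (\<lambda>s r. ms2 d (\<lambda>s1 s2. F s1 s2 r) s) (c#w) =
    ms2 d (\<lambda>s r. ms2 d (\<lambda>s1 s2. F s1 s2 r) (c#s) + ksgn (d c * wdeg d s) * ms2 d (\<lambda>s1 s2. F s1 s2 (c#r)) s) w"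
    by (simp only: ms2.simps)
  also have "\<dots> = ms2 d (\<lambda>s r. ms2 d (\<lambda>s1 s2. F (c#s1) s2 r + ksgn (d c * wdeg d s1) * F s1 (c#s2) r
        + ksgn (d c * (wdeg d s1 + wdeg d s2)) * F s1 s2 (c#r)) s) w"
    by (simp only: e ms2.simps ms2_add)
  also have "\<dots> = ms3 d (\<lambda>a b e. F (c#a) b e + ksgn (d c * wdeg d a) * F a (c#b) e
        + ksgn (d c * (wdeg d a + wdeg d b)) * F a b (c#e)) w"
    by (rule Cons.IH)
  finally show ?case by (simp only: ms3.simps)
qed

lemma ms2_comm: "ms2 d F w = ms2 d (\<lambda>s r. ksgn (wdeg d s * wdeg d r) * F r s) w"
proof (induction w arbitrary: F)
  case Nil then show ?case by simp
next
  case (Cons c w)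
  have "ms2 d F (c#w) = ms2 d (\<lambda>s r. ksgn (wdeg d s * wdeg d r) *
      (F (c#r) s + ksgn (d c * wdeg d r) * F r (c#s))) w"
    by (simp add: Cons.IH[of "\<lambda>s r. F (c#s) r + ksgn (d c * wdeg d s) * F s (c#r)"])
  also have "\<dots> = ms2 d (\<lambda>s r. ksgn ((d c + wdeg d s) * wdeg d r) * F r (c#s) +
      ksgn (d c * wdeg d s) * (ksgn (wdeg d s * (d c + wdeg d r)) * F (c#r) s)) w"
  proof (rule arg_cong[where f="\<lambda>F. ms2 d F w"], intro ext)
    fix s r
    have 1: "(ksgn (wdeg d s * wdeg d r) :: 'a) * ksgn (d c * wdeg d r) = ksgn ((d c + wdeg d s) * wdeg d r)"
      by (simp add: ksgn_add[symmetric] algebra_simps)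
    have 2: "(ksgn (wdeg d s * wdeg d r) :: 'a) = ksgn (d c * wdeg d s) * ksgn (wdeg d s * (d c + wdeg d r))"
      by (simp add: ksgn_add[symmetric] algebra_simps) (rule ksgn_cong, simp)
    have "ksgn (wdeg d s * wdeg d r) * (F (c # r) s + ksgn (d c * wdeg d r) * F r (c # s)) =
       ksgn (wdeg d s * wdeg d r) * F (c # r) s + ksgn ((d c + wdeg d s) * wdeg d r) * F r (c # s)"
      by (simp only: distrib_left mult.assoc[symmetric] 1)
    also have "\<dots> = ksgn (d c * wdeg d s) * (ksgn (wdeg d s * (d c + wdeg d r)) * F (c # r) s) +
        ksgn ((d c + wdeg d s) * wdeg d r) * F r (c # s)"
      by (simp only: 2 mult.assoc)
    finally show "ksgn (wdeg d s * wdeg d r) * (F (c # r) s + ksgn (d c * wdeg d r) * F r (c # s)) =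
         ksgn ((d c + wdeg d s) * wdeg d r) * F r (c # s) +
         ksgn (d c * wdeg d s) * (ksgn (wdeg d s * (d c + wdeg d r)) * F (c # r) s)"
      by (simp only: add.commute)
  qed
  finally show ?case by (simp only: ms2.simps wdeg_Cons)
qed

lemma ms3_swap12: "ms3 d F w = ms3 d (\<lambda>a b e. ksgn (wdeg d a * wdeg d b) * F b a e) w"
proof -
  have "ms3 d F w = ms2 d (\<lambda>s r. ms2 d (\<lambda>s1 s2. F s1 s2 r) s) w" by (rule ms2_nest2[symmetric])
  also have "\<dots> = ms2 d (\<lambda>s r. ms2 d (\<lambda>s1 s2. ksgn (wdeg d s1 * wdeg d s2) * F s2 s1 r) s) w"
    by (subst ms2_comm) simp
  also have "\<dots> = ms3 d (\<lambda>a b e. ksgn (wdeg d a * wdeg d b) * F b a e) w" by (rule ms2_nest2)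
  finally show ?thesis .
qed

lemma ms2_only_nil1: "ms2 d (\<lambda>s r. if s = [] then G r else 0) w = G w"
proof (induction w arbitrary: G)
  case Nil then show ?case by simp
next
  case (Cons c w)
  have "ms2 d (\<lambda>s r. if s = [] then G r else 0) (c#w) = ms2 d (\<lambda>s r. if s = [] then G (c#r) else 0) w"
    by simp (rule ms2_cong, simp)
  then show ?case using Cons.IH by simp
qed

lemma ms2_only_nil2: "ms2 d (\<lambda>s r. if r = [] then G s else 0) w = G w"
proof (induction w arbitrary: G)
  case Nil then show ?case by simp
next
  case (Cons c w)
  have "ms2 d (\<lambda>s r. if r = [] then G s else 0) (c#w) = ms2 d (\<lambda>s r. if r = [] then G (c#s) else 0) w"
    by simp
  then show ?case using Cons.IH by simp
qed

lemma ms2_split3: "w \<noteq> [] \<Longrightarrow> ms2 d F w = F [] w + F w [] + ms2 d (\<lambda>s r. if s \<noteq> [] \<and> r \<noteq> [] then F s r else 0) w"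
proof -
  assume w: "w \<noteq> []"
  have "F = (\<lambda>s r. (if s = [] then F [] r else 0) + (if r = [] then F s [] else 0)
     + (if s \<noteq> [] \<and> r \<noteq> [] then F s r else 0) - (if s = [] then (if r = [] then F [] [] else 0) else 0))"
    by (auto intro!: ext)
  then have "ms2 d F w = ms2 d (\<lambda>s r. (if s = [] then F [] r else 0) + (if r = [] then F s [] else 0)
     + (if s \<noteq> [] \<and> r \<noteq> [] then F s r else 0) - (if s = [] then (if r = [] then F [] [] else 0) else 0)) w"
    by metis
  also have "\<dots> = F [] w + F w [] + ms2 d (\<lambda>s r. if s \<noteq> [] \<and> r \<noteq> [] then F s r else 0) w
      - (if w = [] then F [] [] else 0)"
    by (simp only: ms2_diff ms2_add ms2_only_nil1 ms2_only_nil2)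
  finally show ?thesis using w by simp
qed

lemma ms2_append: "ms2 d F (u @ v) = ms2 d (\<lambda>s r. ms2 d (\<lambda>s' r'. ksgn (wdeg d r * wdeg d s') * F (s @ s') (r @ r')) v) u"
proof (induction u arbitrary: F)
  case Nil then show ?case by simp
next
  case (Cons c u)
  have "ms2 d F ((c#u) @ v) = ms2 d (\<lambda>s r. ms2 d (\<lambda>s' r'. ksgn (wdeg d r * wdeg d s') *
       (F (c # s @ s') (r @ r') + ksgn (d c * (wdeg d s + wdeg d s')) * F (s @ s') (c # r @ r'))) v) u"
    using Cons.IH[of "\<lambda>s r. F (c#s) r + ksgn (d c * wdeg d s) * F s (c#r)"] by simp
  also have "\<dots> = ms2 d (\<lambda>s r. ms2 d (\<lambda>s' r'. ksgn (wdeg d r * wdeg d s') * F (c # s @ s') (r @ r')) v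
     + ksgn (d c * wdeg d s) * ms2 d (\<lambda>s' r'. ksgn ((d c + wdeg d r) * wdeg d s') * F (s @ s') (c # r @ r')) v) u"
  proof (rule arg_cong[where f="\<lambda>F. ms2 d F u"], intro ext)
    fix s r
    have e: "\<And>s'. (ksgn (wdeg d r * wdeg d s') :: 'a) * ksgn (d c * wdeg d s + d c * wdeg d s') =
        ksgn (d c * wdeg d s) * ksgn ((d c + wdeg d r) * wdeg d s')"
      by (simp add: ksgn_add[symmetric] algebra_simps)
    show "ms2 d (\<lambda>s' r'. ksgn (wdeg d r * wdeg d s') *
       (F (c # s @ s') (r @ r') + ksgn (d c * (wdeg d s + wdeg d s')) * F (s @ s') (c # r @ r'))) v =
      ms2 d (\<lambda>s' r'. ksgn (wdeg d r * wdeg d s') * F (c # s @ s') (r @ r')) v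
     + ksgn (d c * wdeg d s) * ms2 d (\<lambda>s' r'. ksgn ((d c + wdeg d r) * wdeg d s') * F (s @ s') (c # r @ r')) v"
      by (simp only: distrib_left ms2_add ms2_scale[symmetric] mult.assoc[symmetric] e)
  qed
  finally show ?case by (simp only: ms2.simps wdeg_Cons append_Cons)
qed


section \<open>Graded symmetry\<close>

definition symf :: "(nat \<Rightarrow> int) \<Rightarrow> (nat list \<Rightarrow> 'a::comm_ring_1) \<Rightarrow> bool" where
  "symf d F \<longleftrightarrow> (\<forall>u a b v. F (u@a#b#v) = kpair d a b * F (u@b#a#v))"

lemma kpair_comm: "kpair d a b = kpair d b a" by (simp add: kpair_def mult.commute)
lemma kpair_sq: "(kpair d a b :: 'a::comm_ring_1) * kpair d a b = 1" by (simp add: kpair_def ksgn_sq)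

lemma ksgn_even: "even a \<Longrightarrow> ksgn a = 1" by (simp add: ksgn_def)
lemma ksgn_odd: "odd a \<Longrightarrow> ksgn a = -1" by (simp add: ksgn_def)

lemma ksgn_eqI: "(even a \<longleftrightarrow> even b) \<Longrightarrow> ksgn a = ksgn b"
  by (simp add: ksgn_def)

lemma symf_zero:
  fixes F :: "nat list \<Rightarrow> 'a::field_char_0"
  assumes "symf d F" "odd (d a)" shows "F (u@a#a#v) = 0"
proof -
  have "F (u@a#a#v) = kpair d a a * F (u@a#a#v)" using assms(1) unfolding symf_def by blast
  also have "kpair d a a = (-1::'a)" using assms(2) by (simp add: kpair_def ksgn_odd)
  finally show ?thesis by simp
qed

lemma sorted_odd_rep:
  assumes "sorted w" "odd_rep d w" shows "\<exists>u a v. w = u@a#a#v \<and> odd (d a)"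
proof -
  obtain i j where ij: "i<j" "j<length w" "w!i = w!j" "odd (d (w!i))" using assms(2) by (auto simp: odd_rep_def)
  have "w!i \<le> w!Suc i" using assms(1) ij by (intro sorted_nth_mono) auto
  moreover have "w!Suc i \<le> w!j" using assms(1) ij by (intro sorted_nth_mono) auto
  ultimately have eq: "w!Suc i = w!i" using ij by simp
  have "w = take i w @ w!i # drop (Suc i) w" using ij by (intro id_take_nth_drop) simp
  also have "drop (Suc i) w = w!Suc i # drop (Suc (Suc i)) w" using ij by (simp add: Cons_nth_drop_Suc)
  finally show ?thesis using eq ij by metis
qed

fun potr :: "nat list \<Rightarrow> nat" where
  "potr [] = 0" | "potr (a#w) = sum_list w + potr w"

lemma potr_append: "potr (u@v) = potr u + length u * sum_list v + potr v"
  by (induction u) auto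

lemma potr_le: "potr w \<le> length w * sum_list w"
  by (induction w) (auto simp: algebra_simps)

lemma unsorted_split: "\<not> sorted w \<Longrightarrow> \<exists>u a b v. w = u@a#b#v \<and> a > b"
proof (induction w)
  case Nil then show ?case by simp
next
  case (Cons x w)
  show ?case
  proof (cases "sorted w")
    case True
    then obtain y w' where w: "w = y#w'" "x > y" using Cons.prems
      by (cases w) (auto simp: not_le)
    then show ?thesis by (metis append_Nil)
  next
    case False
    then obtain u a b v where "w = u@a#b#v" "a > b" using Cons.IH by blast
    then show ?thesis by (metis append_Cons)
  qed
qed

lemma swap_lemma:
  fixes F G :: "nat list \<Rightarrow> 'a::field_char_0"
  assumes "symf d F" "symf d G"
    and P: "\<And>u a b v. P (u@a#b#v) \<Longrightarrow> P (u@b#a#v)"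
    and agree: "\<And>w. sorted w \<Longrightarrow> \<not> odd_rep d w \<Longrightarrow> P w \<Longrightarrow> F w = G w"
  shows "P w \<Longrightarrow> F w = G w"
proof (induction w rule: measure_induct_rule[where f="\<lambda>w. length w * sum_list w - potr w"])
  case (less w)
  show ?case
  proof (cases "sorted w")
    case True
    show ?thesis
    proof (cases "odd_rep d w")
      case False show ?thesis using agree[OF True False less.prems] .
    next
      case True
      then obtain u a v where uv: "w = u@a#a#v" "odd (d a)" using sorted_odd_rep \<open>sorted w\<close> by blast
      have "F w = 0" unfolding uv(1) by (rule symf_zero[OF assms(1) uv(2)])
      moreover have "G w = 0" unfolding uv(1) by (rule symf_zero[OF assms(2) uv(2)])
      ultimately show ?thesis by simp
    qed
  next
    case False
    then obtain u a b v where w: "w = u@a#b#v" "a > b" using unsorted_split by blast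
    let ?w' = "u@b#a#v"
    have pw: "potr ?w' = potr w + (a - b)" using w by (simp add: potr_append algebra_simps)
    have sw: "sum_list ?w' = sum_list w" "length ?w' = length w" using w by simp_all
    have "potr ?w' \<le> length ?w' * sum_list ?w'" by (rule potr_le)
    then have le: "potr ?w' \<le> length w * sum_list w" by (simp only: sw)
    have lt: "potr w < potr ?w'" using pw w(2) by simp
    have "length w * sum_list w - potr ?w' < length w * sum_list w - potr w"
      using lt le by (intro diff_less_mono2) auto
    then have "length ?w' * sum_list ?w' - potr ?w' < length w * sum_list w - potr w"
      using sw by simp
    moreover have "P ?w'" using P[of u a b v] less.prems w(1) by simp
    ultimately have e1: "F ?w' = G ?w'" by (rule less.IH)
    have e2: "F w = kpair d a b * F ?w'" unfolding w(1) using assms(1) unfolding symf_def by blast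
    have e3: "G w = kpair d a b * G ?w'" unfolding w(1) using assms(2) unfolding symf_def by blast
    show ?thesis unfolding e2 e3 e1 ..
  qed
qed

lemma mset_swap: "mset (u@a#b#v) = mset (u@b#a#v)" by simp

lemma odd_rep_count: "odd_rep d w \<longleftrightarrow> (\<exists>a. odd (d a) \<and> 2 \<le> count (mset w) a)"
proof (induction w)
  case Nil then show ?case by simp
next
  case (Cons c w)
  show ?case
  proof
    assume "odd_rep d (c#w)"
    then show "\<exists>a. odd (d a) \<and> 2 \<le> count (mset (c#w)) a"
      unfolding odd_rep_Cons
    proof
      assume "odd (d c) \<and> c \<in> set w"
      then show ?thesis by (intro exI[of _ c]) (simp add: Suc_le_eq)
    next
      assume "odd_rep d w"
      then obtain a where a: "odd (d a)" "2 \<le> count (mset w) a" using Cons.IH by blast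
      have "count (mset w) a \<le> count (mset (c#w)) a" by simp
      then show ?thesis using a by (intro exI[of _ a] conjI) linarith+
    qed
  next
    assume "\<exists>a. odd (d a) \<and> 2 \<le> count (mset (c#w)) a"
    then obtain a where a: "odd (d a)" "2 \<le> count (mset (c#w)) a" by blast
    show "odd_rep d (c#w)"
    proof (cases "a = c")
      case True
      have "count (mset (c#w)) c = Suc (count (mset w) c)" by simp
      moreover have "2 \<le> count (mset (c#w)) c" using a(2) True by simp
      ultimately have "count (mset w) c \<noteq> 0" by linarith
      then have "c \<in> set w" by (metis count_mset_0_iff)
      then show ?thesis using a True by (simp add: odd_rep_Cons)
    next
      case False
      then have "odd_rep d w" using a Cons.IH by auto
      then show ?thesis by (simp add: odd_rep_Cons)
    qed
  qed
qed

lemma odd_rep_mset: "mset u = mset v \<Longrightarrow> odd_rep d u = odd_rep d v"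
  by (simp add: odd_rep_count)

lemma sort_mset: "mset u = mset v \<Longrightarrow> sort u = sort v"
  by (metis properties_for_sort mset_sort sorted_sort)

lemma wdeg_mset: "mset u = mset v \<Longrightarrow> wdeg d u = wdeg d v"
  unfolding wdeg_def by (metis mset_map sum_mset_sum_list)

lemma odd_rep_sort[simp]: "odd_rep d (sort w) = odd_rep d w"
  by (rule odd_rep_mset) simp

lemma wdeg_sort[simp]: "wdeg d (sort w) = wdeg d w"
  by (rule wdeg_mset) simp

lemma wdeg_filter_swap: "wdeg d (filter P (u@a#b#v)) = wdeg d (filter P (u@b#a#v))"
  by (rule wdeg_mset) simp

lemma ksort_swap0:
  assumes "a < b"
  shows "(ksort_sign d (a#b#v) :: 'a::comm_ring_1) = kpair d a b * ksort_sign d (b#a#v)"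
proof -
  let ?A = "ksgn (d a * wdeg d (filter (\<lambda>c. c < a) v)) :: 'a"
  let ?B = "ksgn (d b * wdeg d (filter (\<lambda>c. c < b) v)) :: 'a"
  let ?K = "ksgn (d a * d b) :: 'a"
  have 1: "ksort_sign d (a#b#v) = ?A * (?B * ksort_sign d v)"
    using assms by (simp add: ksort_sign_Cons)
  have 2: "ksort_sign d (b#a#v) = ksgn (d b * (d a + wdeg d (filter (\<lambda>c. c < b) v))) * (?A * ksort_sign d v)"
    using assms by (simp add: ksort_sign_Cons)
  have 3: "ksgn (d b * (d a + wdeg d (filter (\<lambda>c. c < b) v))) = ?K * ?B"
    by (simp only: distrib_left ksgn_add mult.commute[of "d b" "d a"])
  have 4: "?K * ?K = 1" by (rule ksgn_sq)
  have "kpair d a b * ksort_sign d (b#a#v) = (?K * ?K) * (?A * (?B * ksort_sign d v))"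
    unfolding 2 3 kpair_def by (simp only: mult_ac)
  then show ?thesis unfolding 4 1 by simp
qed

lemma ksort_swap:
  assumes "a \<noteq> b"
  shows "(ksort_sign d (u@a#b#v) :: 'a::comm_ring_1) = kpair d a b * ksort_sign d (u@b#a#v)"
proof (induction u)
  case Nil
  show ?case
  proof (cases "a < b")
    case True
    then show ?thesis using ksort_swap0[OF True, of d v] by (simp only: append_Nil)
  next
    case False
    then have "b < a" using assms by simp
    then have "(ksort_sign d (b#a#v) :: 'a) = kpair d b a * ksort_sign d (a#b#v)" by (rule ksort_swap0)
    then have "kpair d a b * (ksort_sign d (b#a#v) :: 'a) = (kpair d a b * kpair d a b) * ksort_sign d (a#b#v)"
      by (simp add: kpair_comm mult.assoc)
    then show ?thesis by (simp only: kpair_sq mult_1 append_Nil)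
  qed
next
  case (Cons c u)
  have "wdeg d (filter (\<lambda>x. x < c) (u@a#b#v)) = wdeg d (filter (\<lambda>x. x < c) (u@b#a#v))"
    by (rule wdeg_filter_swap)
  then show ?case unfolding append_Cons ksort_sign_Cons Cons by (simp only: mult_ac)
qed

lemma symf_ext:
  fixes h :: "nat list \<Rightarrow> 'a::comm_ring_1"
  shows "symf d (\<lambda>w. if odd_rep d w then 0 else ksort_sign d w * h (sort w))"
  unfolding symf_def
proof (intro allI)
  fix u a b v
  have o: "odd_rep d (u@a#b#v) = odd_rep d (u@b#a#v)" by (rule odd_rep_mset) simp
  have s: "sort (u@a#b#v) = sort (u@b#a#v)" by (rule sort_mset) simp
  show "(if odd_rep d (u@a#b#v) then 0 else ksort_sign d (u@a#b#v) * h (sort (u@a#b#v))) =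
    kpair d a b * (if odd_rep d (u@b#a#v) then 0 else ksort_sign d (u@b#a#v) * h (sort (u@b#a#v)))"
  proof (cases "a = b")
    case True
    show ?thesis
    proof (cases "odd (d a)")
      case True
      have "odd_rep d (u@a#b#v)" using True \<open>a = b\<close> by (auto simp: odd_rep_count intro!: exI[of _ a])
      then show ?thesis using o by simp
    next
      case False
      then have "kpair d a b = (1::'a)" using \<open>a = b\<close> by (simp add: kpair_def ksgn_even)
      then show ?thesis using \<open>a = b\<close> by simp
    qed
  next
    case False
    have k: "ksort_sign d (u@a#b#v) = kpair d a b * ksort_sign d (u@b#a#v)" by (rule ksort_swap[OF False])
    show ?thesis unfolding o s k by (simp add: mult.assoc)
  qed
qed

lemma mono_ext: "mono d w m = (if odd_rep d w then 0 else ksort_sign d w * (if m = sort w then 1 else 0))"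
  by (simp add: mono_def)

lemma symf_mono: "symf d (\<lambda>w. mono d w m)"
  using symf_ext[of d "\<lambda>s. if m = s then 1 else 0"] by (simp add: mono_ext)

lemma symf_wext: "symf d (\<lambda>w. wext d l w j)"
proof -
  have "(\<lambda>w. wext d l w j) = (\<lambda>w. if odd_rep d w then 0 else ksort_sign d w * l (sort w) j)"
    by (auto simp: wext_def)
  then show ?thesis using symf_ext[of d "\<lambda>s. l s j"] by simp
qed

lemma ksort_sorted: "sorted w \<Longrightarrow> ksort_sign d w = 1"
proof -
  assume "sorted w"
  have "\<not> (w!a > w!b)" if "a<b" "b<length w" for a b
    using sorted_nth_mono[OF \<open>sorted w\<close>, of a b] that by simp
  then have X: "{(a,b). a < b \<and> b < length w \<and> w!a > w!b} = {}" by auto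
  show ?thesis by (simp only: ksort_sign_def X prod.empty)
qed

lemma mono_sorted: "sorted w \<Longrightarrow> \<not> odd_rep d w \<Longrightarrow> mono d w m = (if m = w then 1 else 0)"
  by (simp add: mono_def ksort_sorted sorted_sort_id)

lemma symfD: "symf d F \<Longrightarrow> F (u@a#b#v) = kpair d a b * F (u@b#a#v)"
  unfolding symf_def by blast

lemma symfI: "(\<And>u a b v. F (u@a#b#v) = kpair d a b * F (u@b#a#v)) \<Longrightarrow> symf d F"
  unfolding symf_def by blast

lemma symf_scale: "symf d F \<Longrightarrow> symf d (\<lambda>w. c * F w)"
proof (rule symfI)
  fix u a b v assume "symf d F"
  then have "F (u@a#b#v) = kpair d a b * F (u@b#a#v)" by (rule symfD)
  then show "c * F (u@a#b#v) = kpair d a b * (c * F (u@b#a#v))" by (simp add: mult.left_commute)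
qed

lemma symf_add: "symf d F \<Longrightarrow> symf d G \<Longrightarrow> symf d (\<lambda>w. F w + G w)"
proof (rule symfI)
  fix u a b v assume "symf d F" "symf d G"
  then have "F (u@a#b#v) = kpair d a b * F (u@b#a#v)" "G (u@a#b#v) = kpair d a b * G (u@b#a#v)"
    by (auto intro: symfD)
  then show "F (u@a#b#v) + G (u@a#b#v) = kpair d a b * (F (u@b#a#v) + G (u@b#a#v))" by (simp add: distrib_left)
qed

lemma symf_sum: "finite A \<Longrightarrow> (\<And>i. i \<in> A \<Longrightarrow> symf d (F i)) \<Longrightarrow> symf d (\<lambda>w. \<Sum>i\<in>A. F i w)"
proof (rule symfI)
  fix u a b v assume A: "\<And>i. i \<in> A \<Longrightarrow> symf d (F i)"
  have "(\<Sum>i\<in>A. F i (u@a#b#v)) = (\<Sum>i\<in>A. kpair d a b * F i (u@b#a#v))"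
    by (rule sum.cong[OF refl], rule symfD[OF A])
  then show "(\<Sum>i\<in>A. F i (u@a#b#v)) = kpair d a b * (\<Sum>i\<in>A. F i (u@b#a#v))" by (simp add: sum_distrib_left)
qed

lemma symf_prefix: "symf d F \<Longrightarrow> symf d (\<lambda>w. F (x @ w))"
proof (rule symfI)
  fix u a b v assume "symf d F"
  then have "F ((x@u)@a#b#v) = kpair d a b * F ((x@u)@b#a#v)" by (rule symfD)
  then show "F (x@u@a#b#v) = kpair d a b * F (x@u@b#a#v)" by simp
qed

lemma symf_suffix: "symf d F \<Longrightarrow> symf d (\<lambda>w. F (w @ x))"
proof (rule symfI)
  fix u a b v assume "symf d F"
  then have "F (u@a#b#(v@x)) = kpair d a b * F (u@b#a#(v@x))" by (rule symfD)
  then show "F ((u@a#b#v)@x) = kpair d a b * F ((u@b#a#v)@x)" by simp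
qed


section \<open>Symmetry of split sums and coderivations\<close>

lemma sym_ext_eq:
  fixes F :: "nat list \<Rightarrow> 'a::field_char_0"
  assumes "symf d F"
  shows "F w = (if odd_rep d w then 0 else ksort_sign d w * F (sort w))"
proof (rule swap_lemma[of d F "\<lambda>w. if odd_rep d w then 0 else ksort_sign d w * F (sort w)" "\<lambda>_. True", OF assms symf_ext])
  fix w assume "sorted w" "\<not> odd_rep d w"
  then show "F w = (if odd_rep d w then 0 else ksort_sign d w * F (sort w))"
    by (simp add: ksort_sorted sorted_sort_id)
qed auto

lemma symf_wdeg: "symf d F \<Longrightarrow> symf d (\<lambda>s. g (wdeg d s) * F s)"
proof (rule symfI)
  fix u a b v assume "symf d F"
  then have "F (u@a#b#v) = kpair d a b * F (u@b#a#v)" by (rule symfD)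
  moreover have e: "wdeg d (u@a#b#v) = wdeg d (u@b#a#v)" by simp
  ultimately show "g (wdeg d (u@a#b#v)) * F (u@a#b#v) = kpair d a b * (g (wdeg d (u@b#a#v)) * F (u@b#a#v))"
    unfolding e by (simp only: mult.left_commute)
qed

definition sym2 :: "(nat \<Rightarrow> int) \<Rightarrow> (nat list \<Rightarrow> nat list \<Rightarrow> 'a::comm_ring_1) \<Rightarrow> bool" where
  "sym2 d F \<longleftrightarrow> (\<forall>s. symf d (\<lambda>r. F s r)) \<and> (\<forall>r. symf d (\<lambda>s. F s r))"

lemma sym2_step: "sym2 d F \<Longrightarrow> sym2 d (\<lambda>s r. F (c#s) r + ksgn (d c * wdeg d s) * F s (c#r))"
  unfolding sym2_def
proof (intro conjI allI)
  assume a: "(\<forall>s. symf d (F s)) \<and> (\<forall>r. symf d (\<lambda>s. F s r))"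
  fix s
  have 1: "symf d (\<lambda>r. F (c#s) r)" using a by blast
  have 0: "symf d (F s)" using a by blast
  have 2: "symf d (\<lambda>r. F s ([c] @ r))" by (rule symf_prefix[OF 0])
  have 3: "symf d (\<lambda>r. F (c#s) r + ksgn (d c * wdeg d s) * F s ([c] @ r))"
    by (rule symf_add[OF 1 symf_scale[OF 2]])
  then show "symf d (\<lambda>r. F (c#s) r + ksgn (d c * wdeg d s) * F s (c#r))" by (simp only: append_Cons append_Nil)
next
  assume a: "(\<forall>s. symf d (F s)) \<and> (\<forall>r. symf d (\<lambda>s. F s r))"
  fix r
  have 0: "symf d (\<lambda>s. F s r)" "symf d (\<lambda>s. F s (c#r))" using a by blast+
  have 1: "symf d (\<lambda>s. F ([c] @ s) r)" by (rule symf_prefix[OF 0(1)])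
  have 2: "symf d (\<lambda>s. ksgn (d c * wdeg d s) * F s (c#r))"
    by (rule symf_wdeg[OF 0(2), where g="\<lambda>t. ksgn (d c * t)"])
  have 3: "symf d (\<lambda>s. F ([c] @ s) r + ksgn (d c * wdeg d s) * F s (c#r))" by (rule symf_add[OF 1 2])
  then show "symf d (\<lambda>s. F (c#s) r + ksgn (d c * wdeg d s) * F s (c#r))" by (simp only: append_Cons append_Nil)
qed

lemma ring_aux1:
  fixes K :: "'a::comm_ring_1"
  assumes K: "K*K = 1"
  shows "K*x1 + K*A*x2 + B*(x3 + A*(K*x4)) = K*(x1 + K*B*x3 + A*(x2 + B*x4))"
proof -
  have "K*(x1 + K*B*x3 + A*(x2 + B*x4)) = K*x1 + (K*K)*(B*x3) + K*A*x2 + K*A*B*x4"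
    by (simp add: algebra_simps)
  also have "\<dots> = K*x1 + B*x3 + K*A*x2 + K*A*B*x4" using K by simp
  finally show ?thesis by (simp add: algebra_simps)
qed

lemma ms2_swap_base:
  assumes "sym2 d F"
  shows "ms2 d F (a#b#v) = kpair d a b * ms2 d F (b#a#v)"
proof -
  have s1: "F (a#b#s) r = kpair d a b * F (b#a#s) r" for s r
    using assms unfolding sym2_def using symfD[of d "\<lambda>s. F s r" "[]" a b s] by simp
  have s2: "F s (a#b#r) = kpair d a b * F s (b#a#r)" for s r
    using assms unfolding sym2_def using symfD[of d "F s" "[]" a b r] by simp
  have h1: "(ksgn (d a * (d b + wdeg d s)) :: 'a) = kpair d a b * ksgn (d a * wdeg d s)" for s
    by (simp add: kpair_def ksgn_add[symmetric] distrib_left)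
  have h2: "(ksgn (d b * (d a + wdeg d s)) :: 'a) = kpair d a b * ksgn (d b * wdeg d s)" for s
    by (simp add: kpair_def ksgn_add[symmetric] distrib_left mult.commute)
  have "ms2 d F (a#b#v) = ms2 d (\<lambda>s r. kpair d a b * (F (b#a#s) r + ksgn (d b * (d a + wdeg d s)) * F (a#s) (b#r)
      + ksgn (d a * wdeg d s) * (F (b#s) (a#r) + ksgn (d b * wdeg d s) * F s (b#a#r)))) v"
  proof (simp only: ms2.simps, rule ms2_cong)
    fix s r
    show "F (a # b # s) r + ksgn (d a * wdeg d (b # s)) * F (b # s) (a # r) +
         ksgn (d b * wdeg d s) * (F (a # s) (b # r) + ksgn (d a * wdeg d s) * F s (a # b # r)) =
         kpair d a b * (F (b#a#s) r + ksgn (d b * (d a + wdeg d s)) * F (a#s) (b#r)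
      + ksgn (d a * wdeg d s) * (F (b#s) (a#r) + ksgn (d b * wdeg d s) * F s (b#a#r)))"
      unfolding s1 s2 wdeg_Cons h1 h2
      by (rule ring_aux1[OF kpair_sq])
  qed
  also have "\<dots> = kpair d a b * ms2 d F (b#a#v)"
    by (simp only: ms2_scale ms2.simps wdeg_Cons)
  finally show ?thesis .
qed

lemma ms2_symf: "sym2 d F \<Longrightarrow> symf d (ms2 d F)"
proof -
  assume a: "sym2 d F"
  have "ms2 d F (u@a#b#v) = kpair d a b * ms2 d F (u@b#a#v)" for u a b v
    using a
  proof (induction u arbitrary: F)
    case Nil then show ?case unfolding append_Nil by (rule ms2_swap_base)
  next
    case (Cons c u)
    show ?case unfolding append_Cons ms2.simps by (rule Cons.IH[OF sym2_step[OF Cons.prems]])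
  qed
  then show ?thesis by (rule symfI)
qed

lemma symf_param_ms2:
  "(\<And>s r. symf d (\<lambda>u. F u s r)) \<Longrightarrow> symf d (\<lambda>u. ms2 d (F u) w)"
proof (rule symfI)
  fix u a b v assume a: "\<And>s r. symf d (\<lambda>u. F u s r)"
  have "ms2 d (F (u@a#b#v)) w = ms2 d (\<lambda>s r. kpair d a b * F (u@b#a#v) s r) w"
    by (rule ms2_cong) (rule symfD[OF a])
  then show "ms2 d (F (u@a#b#v)) w = kpair d a b * ms2 d (F (u@b#a#v)) w" by (simp add: ms2_scale)
qed

section \<open>Coderivations via split sums\<close>

lemma selm_nil_iff: "length ms = length w \<Longrightarrow> (selm ms w = []) = (True \<notin> set ms)"
proof (induction w arbitrary: ms)
  case Nil then show ?case by simp
next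
  case (Cons c w) then show ?case by (cases ms) auto
qed

lemma length_selm_rejm: "length ms = length w \<Longrightarrow> length (selm ms w) + length (rejm ms w) = length w"
proof (induction w arbitrary: ms)
  case Nil then show ?case by simp
next
  case (Cons c w) then show ?case by (cases ms) auto
qed

lemma set_selm: "set (selm ms w) \<subseteq> set w"
  by (induction ms w rule: selm.induct) auto

lemma set_rejm: "set (rejm ms w) \<subseteq> set w"
  unfolding rejm_def by (rule set_selm)

lemma coder_ms2: "coder n d q w m = ms2 d (\<lambda>s r. if s = [] then 0 else vprod n d (q s) r m) w"
proof -
  have "coder n d q w m = (\<Sum>ms\<in>{ms. length ms = length w \<and> setm ms \<noteq> {}}.
      unsh_sign d w (setm ms) * vprod n d (q (nths w (setm ms))) (nths w (- setm ms)) m)"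
    unfolding coder_def by (rule sum_subsets_masks)
  also have "\<dots> = (\<Sum>ms\<in>{ms\<in>masks (length w). True \<in> set ms}.
      epsm d ms w * vprod n d (q (selm ms w)) (rejm ms w) m)"
  proof (rule sum.cong)
    show "{ms. length ms = length w \<and> setm ms \<noteq> {}} = {ms\<in>masks (length w). True \<in> set ms}"
      by (auto simp: masks_def setm_empty)
    fix ms assume "ms \<in> {ms\<in>masks (length w). True \<in> set ms}"
    then have l: "length ms = length w" by (simp add: masks_def)
    show "unsh_sign d w (setm ms) * vprod n d (q (nths w (setm ms))) (nths w (- setm ms)) m =
      epsm d ms w * vprod n d (q (selm ms w)) (rejm ms w) m"
      using nths_setm[OF l] unsh_sign_setm[OF l, where 'a='a and d=d] by simp
  qed
  also have "\<dots> = (\<Sum>ms\<in>masks (length w). epsm d ms w * (if selm ms w = [] then 0 else vprod n d (q (selm ms w)) (rejm ms w) m))"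
  proof (simp only: sum.inter_filter[OF finite_masks], rule sum.cong[OF refl])
    fix ms assume "ms \<in> masks (length w)"
    then have l: "length ms = length w" by (simp add: masks_def)
    show "(if True \<in> set ms then epsm d ms w * vprod n d (q (selm ms w)) (rejm ms w) m else 0) =
      epsm d ms w * (if selm ms w = [] then 0 else vprod n d (q (selm ms w)) (rejm ms w) m)"
      using selm_nil_iff[OF l] by simp
  qed
  also have "\<dots> = ms2 d (\<lambda>s r. if s = [] then 0 else vprod n d (q s) r m) w"
    by (rule ms2_masks[symmetric])
  finally show ?thesis .
qed

lemma symf_mono_Cons: "symf d (\<lambda>r. mono d (j#r) m)"
proof -
  have "symf d (\<lambda>r. mono d ([j]@r) m)" by (rule symf_prefix[OF symf_mono])
  then show ?thesis by simp
qed

lemma vprod_symf: "symf d (\<lambda>r. vprod n d v r m)"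
  unfolding vprod_def
proof (rule symf_sum)
  fix j show "symf d (\<lambda>r. v j * mono d (j#r) m)" by (rule symf_scale[OF symf_mono_Cons])
qed simp

lemma sym2_coder:
  assumes "\<And>j. symf d (\<lambda>s. q s j)"
  shows "sym2 d (\<lambda>s r. if s = [] then 0 else vprod n d (q s) r m)"
  unfolding sym2_def
proof (intro conjI allI)
  fix s
  show "symf d (\<lambda>r. if s = [] then 0 else vprod n d (q s) r m)"
  proof (cases "s = []")
    case True then show ?thesis by (simp add: symf_def)
  next
    case False then show ?thesis using vprod_symf[of d n "q s" m] by simp
  qed
next
  fix r
  have "symf d (\<lambda>s. vprod n d (q s) r m)"
    unfolding vprod_def
  proof (rule symf_sum)
    fix j
    have "symf d (\<lambda>s. mono d (j#r) m * q s j)" by (rule symf_scale[OF assms])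
    then show "symf d (\<lambda>s. q s j * mono d (j#r) m)" by (simp only: mult.commute)
  qed simp
  then show "symf d (\<lambda>s. if s = [] then 0 else vprod n d (q s) r m)"
  proof (intro symfI)
    fix u a b v assume "symf d (\<lambda>s. vprod n d (q s) r m)"
    then have "vprod n d (q (u@a#b#v)) r m = kpair d a b * vprod n d (q (u@b#a#v)) r m" by (rule symfD)
    then show "(if u@a#b#v = [] then 0 else vprod n d (q (u@a#b#v)) r m) =
      kpair d a b * (if u@b#a#v = [] then 0 else vprod n d (q (u@b#a#v)) r m)" by simp
  qed
qed

lemma coder_symf:
  assumes "\<And>j. symf d (\<lambda>s. q s j)"
  shows "symf d (\<lambda>w. coder n d q w m)"
  unfolding coder_ms2 by (rule ms2_symf[OF sym2_coder[OF assms]])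


section \<open>Linear extension\<close>

lemma mono_nz: "mono d u m \<noteq> 0 \<Longrightarrow> m = sort u"
  by (auto simp: mono_def split: if_splits)

lemma sum_mono_delta:
  fixes F :: "nat list \<Rightarrow> 'a::field_char_0"
  assumes "symf d F" "finite T" "sort u \<in> T"
  shows "(\<Sum>m\<in>T. mono d u m * F m) = F u"
proof -
  have "(\<Sum>m\<in>T. mono d u m * F m) = (\<Sum>m\<in>T. if m = sort u then mono d u (sort u) * F (sort u) else 0)"
    by (rule sum.cong[OF refl]) (auto dest: mono_nz)
  also have "\<dots> = mono d u (sort u) * F (sort u)" using assms(2,3) by simp
  also have "\<dots> = (if odd_rep d u then 0 else ksort_sign d u * F (sort u))" by (simp add: mono_def)
  also have "\<dots> = F u" using sym_ext_eq[OF assms(1)] by simp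
  finally show ?thesis .
qed

lemma lin_lemma:
  fixes F :: "nat list \<Rightarrow> 'a::field_char_0"
  assumes F: "symf d F" and A: "finite A"
  shows "(\<Sum>m\<in>{m. (\<Sum>i\<in>A. c i * mono d (u i) m) \<noteq> 0}. (\<Sum>i\<in>A. c i * mono d (u i) m) * F m) = (\<Sum>i\<in>A. c i * F (u i))"
proof -
  let ?X = "\<lambda>m. \<Sum>i\<in>A. c i * mono d (u i) m"
  let ?T = "(\<lambda>i. sort (u i)) ` A"
  have fT: "finite ?T" using A by simp
  have sub: "{m. ?X m \<noteq> 0} \<subseteq> ?T"
  proof
    fix m assume "m \<in> {m. ?X m \<noteq> 0}"
    then obtain i where "i \<in> A" "c i * mono d (u i) m \<noteq> 0" by (auto elim: sum.not_neutral_contains_not_neutral)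
    then show "m \<in> ?T" using mono_nz[of d "u i" m] by auto
  qed
  have "(\<Sum>m\<in>{m. ?X m \<noteq> 0}. ?X m * F m) = (\<Sum>m\<in>?T. ?X m * F m)"
    by (rule sum.mono_neutral_left[OF fT sub]) auto
  also have "\<dots> = (\<Sum>m\<in>?T. \<Sum>i\<in>A. c i * (mono d (u i) m * F m))"
    by (simp add: sum_distrib_right mult.assoc)
  also have "\<dots> = (\<Sum>i\<in>A. c i * (\<Sum>m\<in>?T. mono d (u i) m * F m))"
    by (subst sum.swap) (simp add: sum_distrib_left)
  also have "\<dots> = (\<Sum>i\<in>A. c i * F (u i))"
    by (rule sum.cong[OF refl]) (simp add: sum_mono_delta[OF F fT])
  finally show ?thesis .
qed

lemma sum_prod_fs: "(\<Sum>x\<in>A\<times>B. f (fst x) (snd x)) = (\<Sum>a\<in>A. \<Sum>b\<in>B. f a b)"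
  by (simp add: sum.cartesian_product split_def)

lemma coder_as_sum:
  "coder n d r w m = (\<Sum>x\<in>masks (length w) \<times> {..<n}.
      (epsm d (fst x) w * (if selm (fst x) w = [] then 0 else r (selm (fst x) w) (snd x))) * mono d (snd x # rejm (fst x) w) m)"
proof -
  have "coder n d r w m = (\<Sum>ms\<in>masks (length w). epsm d ms w *
     (if selm ms w = [] then 0 else vprod n d (r (selm ms w)) (rejm ms w) m))"
    unfolding coder_ms2 ms2_masks ..
  also have "\<dots> = (\<Sum>ms\<in>masks (length w). \<Sum>j<n.
      (epsm d ms w * (if selm ms w = [] then 0 else r (selm ms w) j)) * mono d (j # rejm ms w) m)"
    by (rule sum.cong[OF refl]) (simp add: vprod_def sum_distrib_left mult.assoc)
  also have "\<dots> = (\<Sum>x\<in>masks (length w) \<times> {..<n}.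
      (epsm d (fst x) w * (if selm (fst x) w = [] then 0 else r (selm (fst x) w) (snd x))) * mono d (snd x # rejm (fst x) w) m)"
    by (rule sum_prod_fs[symmetric])
  finally show ?thesis .
qed

lemma lin_coder_expand:
  fixes G :: "nat list \<Rightarrow> 'a::field_char_0"
  assumes G: "symf d G"
  shows "(\<Sum>m\<in>{m. coder n d r w m \<noteq> 0}. coder n d r w m * G m) =
     ms2 d (\<lambda>s r'. if s = [] then 0 else \<Sum>j<n. r s j * G (j#r')) w"
proof -
  let ?c = "\<lambda>x. epsm d (fst x) w * (if selm (fst x) w = [] then 0 else r (selm (fst x) w) (snd x))"
  let ?u = "\<lambda>x. snd x # rejm (fst x) w"
  have e: "\<And>m. coder n d r w m = (\<Sum>x\<in>masks (length w) \<times> {..<n}. ?c x * mono d (?u x) m)"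
    by (rule coder_as_sum)
  have "(\<Sum>m\<in>{m. coder n d r w m \<noteq> 0}. coder n d r w m * G m) = (\<Sum>x\<in>masks (length w) \<times> {..<n}. ?c x * G (?u x))"
    unfolding e by (rule lin_lemma[OF G]) simp
  also have "\<dots> = (\<Sum>ms\<in>masks (length w). epsm d ms w *
     (if selm ms w = [] then 0 else \<Sum>j<n. r (selm ms w) j * G (j # rejm ms w)))"
    unfolding sum_prod_fs[where f="\<lambda>ms j. epsm d ms w * (if selm ms w = [] then 0 else r (selm ms w) j) * G (j # rejm ms w)"]
    by (rule sum.cong[OF refl]) (simp add: sum_distrib_left mult.assoc)
  also have "\<dots> = ms2 d (\<lambda>s r'. if s = [] then 0 else \<Sum>j<n. r s j * G (j#r')) w"
    by (rule ms2_masks[symmetric])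
  finally show ?thesis .
qed

lemma lin_coder:
  fixes p :: "nat list \<Rightarrow> nat \<Rightarrow> 'a::field_char_0"
  assumes "\<And>j. symf d (\<lambda>s. p s j)"
  shows "comp (coder n d p) (coder n d r) w m' =
    ms2 d (\<lambda>s r'. if s = [] then 0 else \<Sum>j<n. r s j * coder n d p (j#r') m') w"
  unfolding comp_def lin_def by (rule lin_coder_expand[OF coder_symf[OF assms]])


section \<open>Commutators of coderivations\<close>

definition diam :: "nat \<Rightarrow> (nat \<Rightarrow> int) \<Rightarrow> (nat list \<Rightarrow> nat \<Rightarrow> 'a::comm_ring_1) \<Rightarrow> (nat list \<Rightarrow> nat \<Rightarrow> 'a) \<Rightarrow> nat list \<Rightarrow> nat \<Rightarrow> 'a" where
  "diam n d p r s i = ms2 d (\<lambda>a b. if a = [] then 0 else \<Sum>j<n. r a j * p (j#b) i) s"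

lemma coder_Cons: "coder n d p (j#r') m = ms2 d (\<lambda>s2 r2. vprod n d (p (j#s2)) r2 m +
   ksgn (d j * wdeg d s2) * (if s2 = [] then 0 else vprod n d (p s2) (j#r2) m)) r'"
  unfolding coder_ms2 by simp

lemma vprod_lin: "vprod n d (\<lambda>i. v1 i + c * v2 i) r m = vprod n d v1 r m + c * vprod n d v2 r m"
  unfolding vprod_def by (simp add: sum.distrib sum_distrib_left distrib_right mult.assoc)

lemma coder_lin: "coder n d (\<lambda>s i. q1 s i + c * q2 s i) w m = coder n d q1 w m + c * coder n d q2 w m"
proof -
  have "coder n d (\<lambda>s i. q1 s i + c * q2 s i) w m =
    ms2 d (\<lambda>s r. (if s = [] then 0 else vprod n d (q1 s) r m) + c * (if s = [] then 0 else vprod n d (q2 s) r m)) w"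
    unfolding coder_ms2 by (rule ms2_cong) (simp add: vprod_lin)
  then show ?thesis unfolding coder_ms2 by (simp add: ms2_add ms2_scale)
qed

lemma comp_ms3:
  fixes p :: "nat list \<Rightarrow> nat \<Rightarrow> 'a::field_char_0"
  assumes "\<And>j. symf d (\<lambda>s. p s j)"
  shows "comp (coder n d p) (coder n d r) w m =
    ms3 d (\<lambda>a b e. if a = [] then 0 else \<Sum>j<n. r a j * vprod n d (p (j#b)) e m) w +
    ms3 d (\<lambda>a b e. if a = [] then 0 else \<Sum>j<n. r a j * (ksgn (d j * wdeg d b) * (if b = [] then 0 else vprod n d (p b) (j#e) m))) w"
proof -
  have "comp (coder n d p) (coder n d r) w m =
    ms2 d (\<lambda>s r'. if s = [] then 0 else \<Sum>j<n. r s j * coder n d p (j#r') m) w"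
    by (rule lin_coder[OF assms])
  also have "\<dots> = ms2 d (\<lambda>s r'. ms2 d (\<lambda>s2 r2. if s = [] then 0 else \<Sum>j<n. r s j * (vprod n d (p (j#s2)) r2 m +
   ksgn (d j * wdeg d s2) * (if s2 = [] then 0 else vprod n d (p s2) (j#r2) m))) r') w"
  proof (rule ms2_cong)
    fix s r'
    show "(if s = [] then 0 else \<Sum>j<n. r s j * coder n d p (j#r') m) =
      ms2 d (\<lambda>s2 r2. if s = [] then 0 else \<Sum>j<n. r s j * (vprod n d (p (j#s2)) r2 m +
      ksgn (d j * wdeg d s2) * (if s2 = [] then 0 else vprod n d (p s2) (j#r2) m))) r'"
      by (cases "s = []") (simp_all add: ms2_zero coder_Cons ms2_sum ms2_scale)
  qed
  also have "\<dots> = ms3 d (\<lambda>a b e. if a = [] then 0 else \<Sum>j<n. r a j * (vprod n d (p (j#b)) e m +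
   ksgn (d j * wdeg d b) * (if b = [] then 0 else vprod n d (p b) (j#e) m))) w"
    by (rule ms2_nest1)
  also have "\<dots> = ms3 d (\<lambda>a b e. (if a = [] then 0 else \<Sum>j<n. r a j * vprod n d (p (j#b)) e m) +
    (if a = [] then 0 else \<Sum>j<n. r a j * (ksgn (d j * wdeg d b) * (if b = [] then 0 else vprod n d (p b) (j#e) m)))) w"
    by (rule ms3_cong) (simp add: distrib_left sum.distrib)
  finally show ?thesis by (simp only: ms3_add)
qed

lemma partA:
  "ms3 d (\<lambda>a b e. if a = [] then 0 else \<Sum>j<n. r a j * vprod n d (p (j#b)) e m) w = coder n d (diam n d p r) w m"
proof -
  have "ms3 d (\<lambda>a b e. if a = [] then 0 else \<Sum>j<n. r a j * vprod n d (p (j#b)) e m) w =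
    ms2 d (\<lambda>s r'. ms2 d (\<lambda>a b. if a = [] then 0 else \<Sum>j<n. r a j * vprod n d (p (j#b)) r' m) s) w"
    by (rule ms2_nest2[symmetric])
  also have "\<dots> = ms2 d (\<lambda>s r'. if s = [] then 0 else vprod n d (diam n d p r s) r' m) w"
  proof (rule ms2_cong)
    fix s r'
    show "ms2 d (\<lambda>a b. if a = [] then 0 else \<Sum>j<n. r a j * vprod n d (p (j#b)) r' m) s =
      (if s = [] then 0 else vprod n d (diam n d p r s) r' m)"
    proof (cases "s = []")
      case True then show ?thesis by simp
    next
      case False
      have "vprod n d (diam n d p r s) r' m = (\<Sum>i<n. ms2 d (\<lambda>a b. (if a = [] then 0 else \<Sum>j<n. r a j * p (j#b) i) * mono d (i#r') m) s)"
        unfolding vprod_def diam_def by (simp add: ms2_scale[symmetric] mult.commute)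
      also have "\<dots> = ms2 d (\<lambda>a b. \<Sum>i<n. (if a = [] then 0 else \<Sum>j<n. r a j * p (j#b) i) * mono d (i#r') m) s"
        by (rule ms2_sum[symmetric]) simp
      also have "\<dots> = ms2 d (\<lambda>a b. if a = [] then 0 else \<Sum>j<n. r a j * vprod n d (p (j#b)) r' m) s"
        by (rule ms2_cong) (auto simp: vprod_def sum_distrib_left sum_distrib_right mult.assoc intro: sum.swap)
      finally show ?thesis using False by simp
    qed
  qed
  also have "\<dots> = coder n d (diam n d p r) w m" by (rule coder_ms2[symmetric])
  finally show ?thesis .
qed


definition Bx :: "nat \<Rightarrow> (nat \<Rightarrow> int) \<Rightarrow> (nat list \<Rightarrow> nat \<Rightarrow> 'a::comm_ring_1) \<Rightarrow> (nat list \<Rightarrow> nat \<Rightarrow> 'a) \<Rightarrow> int \<Rightarrow> nat list \<Rightarrow> nat list \<Rightarrow> nat list \<Rightarrow> nat list \<Rightarrow> 'a" where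
  "Bx n d p r sr m a b e = (if a = [] \<or> b = [] then 0 else
     ksgn ((wdeg d a + sr) * wdeg d b) * (\<Sum>j<n. \<Sum>i<n. r a j * p b i * mono d (i#j#e) m))"

lemma partB:
  assumes degr: "\<And>s j. s \<noteq> [] \<Longrightarrow> set s \<subseteq> {..<n} \<Longrightarrow> r s j \<noteq> 0 \<Longrightarrow> d j = wdeg d s + sr"
    and w: "set w \<subseteq> {..<n}"
  shows "ms3 d (\<lambda>a b e. if a = [] then 0 else \<Sum>j<n. r a j * (ksgn (d j * wdeg d b) * (if b = [] then 0 else vprod n d (p b) (j#e) m))) w
    = ms3 d (Bx n d p r sr m) w"
proof (rule ms3_cong)
  fix a b e assume a: "set a \<subseteq> set w"
  show "(if a = [] then 0 else \<Sum>j<n. r a j * (ksgn (d j * wdeg d b) * (if b = [] then 0 else vprod n d (p b) (j#e) m))) =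
    Bx n d p r sr m a b e"
  proof (cases "a = [] \<or> b = []")
    case True then show ?thesis by (auto simp: Bx_def)
  next
    case False
    have "(\<Sum>j<n. r a j * (ksgn (d j * wdeg d b) * vprod n d (p b) (j#e) m)) =
      (\<Sum>j<n. ksgn ((wdeg d a + sr) * wdeg d b) * (r a j * vprod n d (p b) (j#e) m))"
    proof (rule sum.cong[OF refl])
      fix j
      show "r a j * (ksgn (d j * wdeg d b) * vprod n d (p b) (j#e) m) = ksgn ((wdeg d a + sr) * wdeg d b) * (r a j * vprod n d (p b) (j#e) m)"
      proof (cases "r a j = 0")
        case True then show ?thesis by simp
      next
        case False
        then have "d j = wdeg d a + sr" using degr[of a j] \<open>\<not> (a = [] \<or> b = [])\<close> a w by auto
        then show ?thesis by (simp add: mult.left_commute)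
      qed
    qed
    then show ?thesis using False
      by (simp add: Bx_def vprod_def sum_distrib_left mult.assoc)
  qed
qed

lemma ksgn_par: "(even a \<longleftrightarrow> even b) \<Longrightarrow> (ksgn a :: 'a::comm_ring_1) = ksgn b"
  by (simp add: ksgn_def)

lemma Bx_swap:
  fixes p r :: "nat list \<Rightarrow> nat \<Rightarrow> 'a::comm_ring_1"
  assumes degr: "\<And>s j. s \<noteq> [] \<Longrightarrow> set s \<subseteq> {..<n} \<Longrightarrow> r s j \<noteq> 0 \<Longrightarrow> d j = wdeg d s + sr"
    and degp: "\<And>s j. s \<noteq> [] \<Longrightarrow> set s \<subseteq> {..<n} \<Longrightarrow> p s j \<noteq> 0 \<Longrightarrow> d j = wdeg d s + sp"
    and w: "set w \<subseteq> {..<n}"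
  shows "ms3 d (Bx n d r p sp m) w = ksgn (sp * sr) * ms3 d (Bx n d p r sr m) w"
proof -
  have "ms3 d (Bx n d r p sp m) w = ms3 d (\<lambda>a b e. ksgn (wdeg d a * wdeg d b) * Bx n d r p sp m b a e) w"
    by (rule ms3_swap12)
  also have "\<dots> = ms3 d (\<lambda>a b e. ksgn (sp * sr) * Bx n d p r sr m a b e) w"
  proof (rule ms3_cong)
    fix a b e assume a: "set a \<subseteq> set w" and b: "set b \<subseteq> set w"
    show "ksgn (wdeg d a * wdeg d b) * Bx n d r p sp m b a e = ksgn (sp * sr) * Bx n d p r sr m a b e"
    proof (cases "a = [] \<or> b = []")
      case True then show ?thesis by (auto simp: Bx_def)
    next
      case False
      have "ksgn (wdeg d a * wdeg d b) * Bx n d r p sp m b a e =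
         (\<Sum>j<n. \<Sum>i<n. (ksgn (wdeg d a * wdeg d b) * ksgn ((wdeg d b + sp) * wdeg d a)) * (p b j * r a i * mono d (i#j#e) m))"
        using False by (simp add: Bx_def sum_distrib_left mult.assoc)
      also have "\<dots> = (\<Sum>i<n. \<Sum>j<n. (ksgn (sp * sr) * ksgn ((wdeg d a + sr) * wdeg d b)) * (r a i * p b j * mono d (j#i#e) m))"
      proof (subst sum.swap, intro sum.cong[OF refl])
        fix i j
        show "ksgn (wdeg d a * wdeg d b) * ksgn ((wdeg d b + sp) * wdeg d a) * (p b j * r a i * mono d (i # j # e) m) =
          ksgn (sp * sr) * ksgn ((wdeg d a + sr) * wdeg d b) * (r a i * p b j * mono d (j # i # e) m)"
        proof (cases "p b j = 0 \<or> r a i = 0")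
          case True then show ?thesis by auto
        next
          case nz: False
          have dj: "d j = wdeg d b + sp" using degp[of b j] nz False b w by auto
          have di: "d i = wdeg d a + sr" using degr[of a i] nz False a w by auto
          have mo: "mono d (j#i#e) m = kpair d j i * mono d (i#j#e) m"
            using symfD[OF symf_mono[where d=d and m=m], where u="[]" and a=j and b=i and v=e] by simp
          have sg: "(ksgn (wdeg d a * wdeg d b) * ksgn ((wdeg d b + sp) * wdeg d a) :: 'a) =
             ksgn (sp * sr) * ksgn ((wdeg d a + sr) * wdeg d b) * kpair d j i"
            unfolding kpair_def dj di ksgn_add[symmetric]
            by (rule ksgn_par) (simp add: algebra_simps even_add even_mult_iff)
          show ?thesis unfolding mo sg by (simp add: mult_ac)
        qed
      qed
      also have "\<dots> = ksgn (sp * sr) * Bx n d p r sr m a b e"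
        using False by (simp add: Bx_def sum_distrib_left mult.assoc)
      finally show ?thesis .
    qed
  qed
  also have "\<dots> = ksgn (sp * sr) * ms3 d (Bx n d p r sr m) w" by (rule ms3_scale)
  finally show ?thesis .
qed

lemma comm_lemma:
  fixes p r :: "nat list \<Rightarrow> nat \<Rightarrow> 'a::field_char_0"
  assumes symp: "\<And>j. symf d (\<lambda>s. p s j)" and symr: "\<And>j. symf d (\<lambda>s. r s j)"
    and degr: "\<And>s j. s \<noteq> [] \<Longrightarrow> set s \<subseteq> {..<n} \<Longrightarrow> r s j \<noteq> 0 \<Longrightarrow> d j = wdeg d s + sr"
    and degp: "\<And>s j. s \<noteq> [] \<Longrightarrow> set s \<subseteq> {..<n} \<Longrightarrow> p s j \<noteq> 0 \<Longrightarrow> d j = wdeg d s + sp"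
    and w: "set w \<subseteq> {..<n}"
  shows "comp (coder n d p) (coder n d r) w m - ksgn (sp * sr) * comp (coder n d r) (coder n d p) w m =
     coder n d (\<lambda>s i. diam n d p r s i + (- ksgn (sp * sr)) * diam n d r p s i) w m"
proof -
  have 1: "comp (coder n d p) (coder n d r) w m = coder n d (diam n d p r) w m + ms3 d (Bx n d p r sr m) w"
    using partB[OF degr w, where p=p and m=m] comp_ms3[OF symp, where r=r and w=w and m=m and n=n] partA[where p=p and r=r and w=w and m=m]
    by simp
  have 2: "comp (coder n d r) (coder n d p) w m = coder n d (diam n d r p) w m + ms3 d (Bx n d r p sp m) w"
    using partB[OF degp w, where p=r and m=m] comp_ms3[OF symr, where r=p and w=w and m=m and n=n] partA[where p=r and r=p and w=w and m=m]
    by simp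
  have kk: "ksgn (sp * sr) * ksgn (sp * sr) = (1::'a)" by (rule ksgn_sq)
  have B: "ms3 d (Bx n d r p sp m) w = ksgn (sp * sr) * ms3 d (Bx n d p r sr m) w"
    by (rule Bx_swap[OF degr degp w])
  have kk': "ksgn (sp * sr) * (ksgn (sp * sr) * X) = (X::'a)" for X
    by (simp add: mult.assoc[symmetric] kk)
  show ?thesis unfolding 1 2 coder_lin B
    by (simp add: distrib_left kk')
qed


lemma symf_move:
  assumes "symf d F"
  shows "F (pre @ u @ j # v) = ksgn (d j * wdeg d u) * F (pre @ j # u @ v)"
proof (induction u arbitrary: pre)
  case Nil then show ?case by simp
next
  case (Cons c u)
  have "F (pre @ (c # u) @ j # v) = F ((pre @ [c]) @ u @ j # v)" by simp
  also have "\<dots> = ksgn (d j * wdeg d u) * F ((pre @ [c]) @ j # u @ v)" by (rule Cons.IH)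
  also have "F ((pre @ [c]) @ j # u @ v) = F (pre @ c # j # u @ v)" by simp
  also have "\<dots> = kpair d c j * F (pre @ j # c # u @ v)" by (rule symfD[OF assms])
  finally have X: "F (pre @ (c # u) @ j # v) = ksgn (d j * wdeg d u) * (kpair d c j * F (pre @ j # c # u @ v))" .
  have S: "ksgn (d j * wdeg d (c#u)) = ksgn (d j * wdeg d u) * kpair d c j"
    by (simp add: kpair_def ksgn_add[symmetric] algebra_simps)
  show ?case unfolding X S by (simp only: mult.assoc append_Cons)
qed

lemma symf_move0:
  assumes "symf d F"
  shows "F (u @ j # v) = ksgn (d j * wdeg d u) * F (j # u @ v)"
  using symf_move[OF assms, of "[]"] by simp

lemma valid_sort: "s \<noteq> [] \<Longrightarrow> set s \<subseteq> {..<n} \<Longrightarrow> \<not> odd_rep d s \<Longrightarrow> valid n d (sort s)"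
proof -
  assume a: "s \<noteq> []" "set s \<subseteq> {..<n}" "\<not> odd_rep d s"
  have "sort s \<noteq> []" using a(1) by (metis length_0_conv length_sort)
  then show ?thesis using a unfolding valid_def by auto
qed

lemma wext_deg:
  assumes li: "lie_infty n d l" and s: "s \<noteq> []" "set s \<subseteq> {..<n}" and nz: "wext d l s j \<noteq> 0"
  shows "j < n \<and> d j = wdeg d s + 1"
proof -
  have no: "\<not> odd_rep d s" and lz: "l (sort s) j \<noteq> 0" using nz by (auto simp: wext_def split: if_splits)
  have "valid n d (sort s)" by (rule valid_sort[OF s no])
  then have "j < n \<and> d j = wdeg d (sort s) + 1" using li lz unfolding lie_infty_def by blast
  then show ?thesis by simp
qed

lemma symf_ifnil: "symf d G \<Longrightarrow> symf d (\<lambda>s. if s = [] then 0 else G s)"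
proof (rule symfI)
  fix u a b v assume "symf d G"
  then have "G (u@a#b#v) = kpair d a b * G (u@b#a#v)" by (rule symfD)
  then show "(if u@a#b#v = [] then 0 else G (u@a#b#v)) = kpair d a b * (if u@b#a#v = [] then 0 else G (u@b#a#v))"
    by simp
qed

lemma symf_wext_Cons: "symf d (\<lambda>r. wext d l (j#r) k)"
proof -
  have "symf d (\<lambda>r. wext d l ([j]@r) k)" by (rule symf_prefix[OF symf_wext])
  then show ?thesis by simp
qed

lemma sym2_jac: "sym2 d (\<lambda>s r. if s = [] then 0 else \<Sum>j<n. wext d l s j * wext d l (j#r) k)"
  unfolding sym2_def
proof (intro conjI allI)
  fix s
  show "symf d (\<lambda>r. if s = [] then 0 else \<Sum>j<n. wext d l s j * wext d l (j#r) k)"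
  proof (cases "s = []")
    case True then show ?thesis by (simp add: symf_def)
  next
    case False
    have "symf d (\<lambda>r. \<Sum>j<n. wext d l s j * wext d l (j#r) k)"
      by (rule symf_sum) (auto intro: symf_scale symf_wext_Cons)
    then show ?thesis using False by simp
  qed
next
  fix r
  have "symf d (\<lambda>s. \<Sum>j<n. wext d l s j * wext d l (j#r) k)"
  proof (rule symf_sum)
    fix j
    have "symf d (\<lambda>s. wext d l (j#r) k * wext d l s j)" by (rule symf_scale[OF symf_wext])
    then show "symf d (\<lambda>s. wext d l s j * wext d l (j#r) k)" by (simp only: mult.commute)
  qed simp
  then show "symf d (\<lambda>s. if s = [] then 0 else \<Sum>j<n. wext d l s j * wext d l (j#r) k)"
    by (rule symf_ifnil)
qed

lemma mono_single: "mono d [j] [k] = (if j = k then 1 else 0)"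
  by (simp add: mono_def ksort_sorted odd_rep_Cons)

lemma mono_long: "r \<noteq> [] \<Longrightarrow> mono d (j#r) [k] = 0"
proof -
  assume r: "r \<noteq> []"
  have "length (sort (j#r)) \<noteq> length [k]" using r by (cases r) simp_all
  then have "[k] \<noteq> sort (j#r)" by metis
  then show ?thesis by (simp add: mono_def)
qed

lemma coder_single:
  assumes "u \<noteq> []" "k < n"
  shows "coder n d q u [k] = q u k"
proof -
  have "coder n d q u [k] = ms2 d (\<lambda>s r. if r = [] then (if s = [] then 0 else q s k) else 0) u"
    unfolding coder_ms2
  proof (rule ms2_cong)
    fix s r
    show "(if s = [] then 0 else vprod n d (q s) r [k]) = (if r = [] then (if s = [] then 0 else q s k) else 0)"
    proof (cases "r = []")
      case True
      have "vprod n d (q s) [] [k] = (\<Sum>j<n. q s j * (if j = k then 1 else 0))"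
        unfolding vprod_def by (simp add: mono_single)
      also have "\<dots> = (\<Sum>j<n. if j = k then q s j else 0)" by (rule sum.cong) auto
      also have "\<dots> = q s k" using assms(2) by (simp add: sum.delta)
      finally show ?thesis using True by simp
    next
      case False then show ?thesis by (simp add: vprod_def mono_long)
    qed
  qed
  also have "\<dots> = (if u = [] then 0 else q u k)" by (rule ms2_only_nil2)
  finally show ?thesis using assms by simp
qed

lemma jacobi:
  fixes l :: "nat list \<Rightarrow> nat \<Rightarrow> 'a::field_char_0"
  assumes li: "lie_infty n d l" and k: "k < n" and w: "set w \<subseteq> {..<n}"
  shows "ms2 d (\<lambda>s r. if s = [] then 0 else \<Sum>j<n. wext d l s j * wext d l (j#r) k) w = 0"
proof -
  let ?J = "\<lambda>w. ms2 d (\<lambda>s r. if s = [] then 0 else \<Sum>j<n. wext d l s j * wext d l (j#r) k) w"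
  have "?J w = (\<lambda>_. 0) w"
  proof (rule swap_lemma[where P="\<lambda>w. set w \<subseteq> {..<n}"])
    show "symf d ?J" by (rule ms2_symf[OF sym2_jac])
    show "symf d (\<lambda>_. 0::'a)" by (simp add: symf_def)
    show "\<And>u a b v. set (u@a#b#v) \<subseteq> {..<n} \<Longrightarrow> set (u@b#a#v) \<subseteq> {..<n}" by auto
    show "set w \<subseteq> {..<n}" by fact
  next
    fix w assume sw: "sorted w" "\<not> odd_rep d w" "set w \<subseteq> {..<n}"
    show "?J w = 0"
    proof (cases "w = []")
      case True then show ?thesis by simp
    next
      case False
      then have "valid n d w" using sw by (simp add: valid_def)
      then have "comp (MapM n d l) (MapM n d l) w [k] = 0" using li unfolding lie_infty_def by simp
      also have "comp (MapM n d l) (MapM n d l) w [k] =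
          ms2 d (\<lambda>s r'. if s = [] then 0 else \<Sum>j<n. wext d l s j * coder n d (wext d l) (j#r') [k]) w"
        unfolding MapM_def by (rule lin_coder[OF symf_wext])
      also have "\<dots> = ?J w"
        by (rule ms2_cong) (simp add: coder_single[OF _ k])
      finally show ?thesis .
    qed
  qed
  then show ?thesis by simp
qed

lemma coder_cong:
  assumes "\<And>s j. s \<noteq> [] \<Longrightarrow> set s \<subseteq> set w \<Longrightarrow> j < n \<Longrightarrow> q1 s j = q2 s j"
  shows "coder n d q1 w m = coder n d q2 w m"
  unfolding coder_ms2
proof (rule ms2_cong)
  fix s r assume "set s \<subseteq> set w"
  then show "(if s = [] then 0 else vprod n d (q1 s) r m) = (if s = [] then 0 else vprod n d (q2 s) r m)"
    using assms unfolding vprod_def by (auto intro!: sum.cong)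
qed

lemma coder_ms2_param:
  "coder n d (\<lambda>e i. ms2 d (\<lambda>s r. F s r e i) x) y m = ms2 d (\<lambda>s r. coder n d (F s r) y m) x"
proof (induction x arbitrary: F)
  case Nil then show ?case by simp
next
  case (Cons c x)
  have "coder n d (\<lambda>e i. ms2 d (\<lambda>s r. F s r e i) (c#x)) y m =
     coder n d (\<lambda>e i. ms2 d (\<lambda>s r. F (c#s) r e i + ksgn (d c * wdeg d s) * F s (c#r) e i) x) y m" by (simp only: ms2.simps)
  also have "\<dots> = ms2 d (\<lambda>s r. coder n d (\<lambda>e i. F (c#s) r e i + ksgn (d c * wdeg d s) * F s (c#r) e i) y m) x"
    by (rule Cons.IH)
  also have "\<dots> = ms2 d (\<lambda>s r. coder n d (F (c#s) r) y m + ksgn (d c * wdeg d s) * coder n d (F s (c#r)) y m) x"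
    by (simp only: coder_lin)
  finally show ?case by (simp only: ms2.simps)
qed

lemma coder_zero: "coder n d (\<lambda>e i. 0) y m = 0"
  by (simp add: coder_def vprod_def)

lemma coder_scale: "coder n d (\<lambda>e i. c * q e i) y m = c * coder n d q y m"
  using coder_lin[of n d "\<lambda>e i. 0" c q y m] by (simp add: coder_zero)

lemma coder_sum: "finite A \<Longrightarrow> coder n d (\<lambda>e i. \<Sum>j\<in>A. Q j e i) y m = (\<Sum>j\<in>A. coder n d (Q j) y m)"
proof (induction A rule: finite_induct)
  case empty then show ?case by (simp add: coder_zero)
next
  case (insert a A)
  then show ?case using coder_lin[of n d "Q a" 1 "\<lambda>e i. \<Sum>j\<in>A. Q j e i" y m] by simp
qed


definition qq :: "(nat \<Rightarrow> int) \<Rightarrow> (nat list \<Rightarrow> nat \<Rightarrow> 'a::comm_ring_1) \<Rightarrow> nat list \<Rightarrow> nat list \<Rightarrow> nat \<Rightarrow> 'a" where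
  "qq d l s = (\<lambda>e. wext d l (s @ e))"

lemma move_sum:
  fixes l :: "nat list \<Rightarrow> nat \<Rightarrow> 'a::field_char_0"
  assumes li: "lie_infty n d l" and sa: "sa \<noteq> []" "set sa \<subseteq> {..<n}"
    and c: "c * ksgn ((wdeg d sa + 1) * wdeg d r) = t"
  shows "c * (\<Sum>j<n. wext d l sa j * wext d l (r @ j # b) k) = t * (\<Sum>j<n. wext d l sa j * wext d l (j # r @ b) k)"
proof -
  have "c * (\<Sum>j<n. wext d l sa j * wext d l (r @ j # b) k) = (\<Sum>j<n. c * (wext d l sa j * wext d l (r @ j # b) k))"
    by (simp add: sum_distrib_left)
  also have "\<dots> = (\<Sum>j<n. t * (wext d l sa j * wext d l (j # r @ b) k))"
  proof (rule sum.cong[OF refl])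
    fix j
    show "c * (wext d l sa j * wext d l (r @ j # b) k) = t * (wext d l sa j * wext d l (j # r @ b) k)"
    proof (cases "wext d l sa j = 0")
      case True then show ?thesis by simp
    next
      case False
      then have dj: "d j = wdeg d sa + 1" using wext_deg[OF li sa] by blast
      have "wext d l (r @ j # b) k = ksgn (d j * wdeg d r) * wext d l (j # r @ b) k"
        by (rule symf_move0[OF symf_wext])
      then show ?thesis using c unfolding dj by (simp add: mult_ac)
    qed
  qed
  also have "\<dots> = t * (\<Sum>j<n. wext d l sa j * wext d l (j # r @ b) k)"
    by (simp add: sum_distrib_left)
  finally show ?thesis .
qed

lemma ms2_split_nil1: "ms2 d F w = F [] w + ms2 d (\<lambda>s r. if s = [] then 0 else F s r) w"
proof -
  have "ms2 d F w = ms2 d (\<lambda>s r. (if s = [] then F [] r else 0) + (if s = [] then 0 else F s r)) w"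
    by (rule ms2_cong) simp
  also have "\<dots> = F [] w + ms2 d (\<lambda>s r. if s = [] then 0 else F s r) w"
    by (simp only: ms2_add ms2_only_nil1)
  finally show ?thesis .
qed


lemma ksgn_neg: "- (ksgn z :: 'a::comm_ring_1) = ksgn (z + 1)"
  by (simp add: ksgn_def)

lemma sgn_test:
  fixes s r a :: int
  shows "(ksgn (s * r) * ksgn (r + 1) * ksgn ((s + a + 1) * r) :: 'a::comm_ring_1) = - ksgn (r * a)"
  unfolding ksgn_neg ksgn_add[symmetric]
  by (rule ksgn_par) (simp add: even_add even_mult_iff algebra_simps)


lemma A_to_W:
  fixes l :: "nat list \<Rightarrow> nat \<Rightarrow> 'a::field_char_0"
  assumes li: "lie_infty n d l" and s: "set s \<subseteq> {..<n}" and e: "set e \<subseteq> {..<n}"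
    and c0: "\<And>a. c0 * ksgn ((wdeg d s + wdeg d a + 1) * wdeg d r) = - ksgn (wdeg d r * wdeg d a)"
  shows "c0 * diam n d (qq d l r) (qq d l s) e k =
    - ms2 d (\<lambda>a b. if a = [] then 0 else ksgn (wdeg d r * wdeg d a) *
        (if s @ a = [] then 0 else \<Sum>j<n. wext d l (s @ a) j * wext d l (j # r @ b) k)) e"
proof -
  have "c0 * diam n d (qq d l r) (qq d l s) e k =
     ms2 d (\<lambda>a b. c0 * (if a = [] then 0 else \<Sum>j<n. wext d l (s @ a) j * wext d l (r @ j # b) k)) e"
    unfolding diam_def qq_def by (simp add: ms2_scale)
  also have "\<dots> = ms2 d (\<lambda>a b. - (if a = [] then 0 else ksgn (wdeg d r * wdeg d a) *
        (if s @ a = [] then 0 else \<Sum>j<n. wext d l (s @ a) j * wext d l (j # r @ b) k))) e"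
  proof (rule ms2_cong)
    fix a b assume a: "set a \<subseteq> set e"
    show "c0 * (if a = [] then 0 else \<Sum>j<n. wext d l (s @ a) j * wext d l (r @ j # b) k) =
       - (if a = [] then 0 else ksgn (wdeg d r * wdeg d a) *
        (if s @ a = [] then 0 else \<Sum>j<n. wext d l (s @ a) j * wext d l (j # r @ b) k))"
    proof (cases "a = []")
      case True then show ?thesis by simp
    next
      case False
      have sa: "s @ a \<noteq> []" "set (s @ a) \<subseteq> {..<n}" using False a s e by auto
      have "c0 * ksgn ((wdeg d (s @ a) + 1) * wdeg d r) = - ksgn (wdeg d r * wdeg d a)"
        using c0[of a] by (simp add: add.assoc)
      from move_sum[OF li sa this] show ?thesis using False sa(1) by simp
    qed
  qed
  also have "\<dots> = - ms2 d (\<lambda>a b. if a = [] then 0 else ksgn (wdeg d r * wdeg d a) *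
        (if s @ a = [] then 0 else \<Sum>j<n. wext d l (s @ a) j * wext d l (j # r @ b) k)) e"
    using ms2_scale[of d "-1"] by simp
  finally show ?thesis .
qed

lemma single:
  fixes l :: "nat list \<Rightarrow> nat \<Rightarrow> 'a::field_char_0"
  assumes li: "lie_infty n d l" and x: "x \<noteq> []" "set x \<subseteq> {..<n}" and e: "set e \<subseteq> {..<n}" and k: "k < n"
  shows "ms2 d (\<lambda>s r. if s = [] then 0 else \<Sum>j<n. wext d l s j * wext d l (j # r @ e) k) x =
   (-1) * (diam n d (wext d l) (qq d l x) e k + (- ksgn (1 * (wdeg d x + 1))) * diam n d (qq d l x) (wext d l) e k)
   + 1/2 * ms2 d (\<lambda>s r. if s \<noteq> [] \<and> r \<noteq> [] then ksgn (wdeg d s + 1) * (diam n d (qq d l s) (qq d l r) e k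
       + (- ksgn ((wdeg d s + 1) * (wdeg d r + 1))) * diam n d (qq d l r) (qq d l s) e k) else 0) x"
proof -
  define \<Phi> where "\<Phi> = (\<lambda>S R. if S = [] then 0 else \<Sum>j<n. wext d l S j * wext d l (j # R) k)"
  define W where "W = (\<lambda>s r. ms2 d (\<lambda>a b. if a = [] then 0 else ksgn (wdeg d r * wdeg d a) * \<Phi> (s @ a) (r @ b)) e)"
  have J: "ms2 d \<Phi> (x @ e) = 0" unfolding \<Phi>_def by (rule jacobi[OF li k]) (use x e in auto)
  have "ms2 d \<Phi> (x @ e) = ms2 d (\<lambda>s r. ms2 d (\<lambda>a b. ksgn (wdeg d r * wdeg d a) * \<Phi> (s @ a) (r @ b)) e) x"
    by (rule ms2_append)
  also have "\<dots> = ms2 d (\<lambda>s r. \<Phi> s (r @ e) + W s r) x"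
  proof (rule ms2_cong)
    fix s r
    show "ms2 d (\<lambda>a b. ksgn (wdeg d r * wdeg d a) * \<Phi> (s @ a) (r @ b)) e = \<Phi> s (r @ e) + W s r"
      unfolding W_def by (subst ms2_split_nil1) simp
  qed
  also have "\<dots> = ms2 d (\<lambda>s r. \<Phi> s (r @ e)) x + ms2 d W x" by (rule ms2_add)
  finally have E: "ms2 d (\<lambda>s r. \<Phi> s (r @ e)) x = - ms2 d W x" using J by (simp add: eq_neg_iff_add_eq_0)
  have LHS: "ms2 d (\<lambda>s r. if s = [] then 0 else \<Sum>j<n. wext d l s j * wext d l (j # r @ e) k) x = ms2 d (\<lambda>s r. \<Phi> s (r @ e)) x"
    unfolding \<Phi>_def by simp
  have S3: "ms2 d W x = W [] x + W x [] + ms2 d (\<lambda>s r. if s \<noteq> [] \<and> r \<noteq> [] then W s r else 0) x"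
    by (rule ms2_split3[OF x(1)])
  have WA: "W x [] = diam n d (wext d l) (qq d l x) e k"
    unfolding W_def diam_def qq_def \<Phi>_def by (rule ms2_cong) (use x in simp)
  have WB: "(- ksgn (1 * (wdeg d x + 1))) * diam n d (qq d l x) (wext d l) e k = W [] x"
  proof -
    have "(- ksgn (1 * (wdeg d x + 1))) * diam n d (qq d l x) (wext d l) e k =
      ms2 d (\<lambda>a b. (- ksgn (1 * (wdeg d x + 1))) * (if a = [] then 0 else \<Sum>j<n. wext d l a j * wext d l (x @ j # b) k)) e"
      unfolding diam_def qq_def by (rule ms2_scale[symmetric])
    also have "\<dots> = W [] x"
      unfolding W_def
    proof (rule ms2_cong)
      fix a b assume a: "set a \<subseteq> set e"
      show "(- ksgn (1 * (wdeg d x + 1))) * (if a = [] then 0 else \<Sum>j<n. wext d l a j * wext d l (x @ j # b) k) =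
        (if a = [] then 0 else ksgn (wdeg d x * wdeg d a) * \<Phi> ([] @ a) (x @ b))"
      proof (cases "a = []")
        case True then show ?thesis by simp
      next
        case False
        have sa: "a \<noteq> []" "set a \<subseteq> {..<n}" using False a e by auto
        have "(- ksgn (1 * (wdeg d x + 1))) * ksgn ((wdeg d a + 1) * wdeg d x) = (ksgn (wdeg d x * wdeg d a) :: 'a)"
          unfolding ksgn_neg ksgn_add[symmetric]
          by (rule ksgn_par) (simp add: even_add even_mult_iff algebra_simps)
        from move_sum[OF li sa this] show ?thesis using False unfolding \<Phi>_def by simp
      qed
    qed
    finally show ?thesis .
  qed
  have WC: "1/2 * ms2 d (\<lambda>s r. if s \<noteq> [] \<and> r \<noteq> [] then ksgn (wdeg d s + 1) * (diam n d (qq d l s) (qq d l r) e k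
       + (- ksgn ((wdeg d s + 1) * (wdeg d r + 1))) * diam n d (qq d l r) (qq d l s) e k) else 0) x
     = - ms2 d (\<lambda>s r. if s \<noteq> [] \<and> r \<noteq> [] then W s r else 0) x"
  proof -
    let ?A = "\<lambda>s r. diam n d (qq d l s) (qq d l r) e k"
    have C1: "ms2 d (\<lambda>s r. if s \<noteq> [] \<and> r \<noteq> [] then ksgn (wdeg d s + 1) * ?A s r else 0) x =
       - ms2 d (\<lambda>s r. if s \<noteq> [] \<and> r \<noteq> [] then W s r else 0) x"
    proof -
      have "ms2 d (\<lambda>s r. if s \<noteq> [] \<and> r \<noteq> [] then ksgn (wdeg d s + 1) * ?A s r else 0) x =
        ms2 d (\<lambda>s r. ksgn (wdeg d s * wdeg d r) * (if r \<noteq> [] \<and> s \<noteq> [] then ksgn (wdeg d r + 1) * ?A r s else 0)) x"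
        by (rule ms2_comm)
      also have "\<dots> = ms2 d (\<lambda>s r. - (if s \<noteq> [] \<and> r \<noteq> [] then W s r else 0)) x"
      proof (rule ms2_cong)
        fix s r assume s: "set s \<subseteq> set x" and r: "set r \<subseteq> set x"
        show "ksgn (wdeg d s * wdeg d r) * (if r \<noteq> [] \<and> s \<noteq> [] then ksgn (wdeg d r + 1) * ?A r s else 0) =
          - (if s \<noteq> [] \<and> r \<noteq> [] then W s r else 0)"
        proof (cases "s \<noteq> [] \<and> r \<noteq> []")
          case False then show ?thesis by auto
        next
          case True
          have c0: "(ksgn (wdeg d s * wdeg d r) * ksgn (wdeg d r + 1)) * ksgn ((wdeg d s + wdeg d a + 1) * wdeg d r) =
             - (ksgn (wdeg d r * wdeg d a) :: 'a)" for a
            unfolding ksgn_neg ksgn_add[symmetric]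
            by (rule ksgn_par) (simp add: even_add even_mult_iff algebra_simps)
          have "(ksgn (wdeg d s * wdeg d r) * ksgn (wdeg d r + 1)) * ?A r s = - W s r"
            unfolding W_def \<Phi>_def using A_to_W[OF li _ e c0, where k=k] s x by auto
          then show ?thesis using True by (simp add: mult.assoc)
        qed
      qed
      also have "\<dots> = - ms2 d (\<lambda>s r. if s \<noteq> [] \<and> r \<noteq> [] then W s r else 0) x"
        using ms2_scale[of d "-1"] by simp
      finally show ?thesis .
    qed
    have C2: "ms2 d (\<lambda>s r. if s \<noteq> [] \<and> r \<noteq> [] then ksgn (wdeg d s + 1) *
        ((- ksgn ((wdeg d s + 1) * (wdeg d r + 1))) * ?A r s) else 0) x =
       - ms2 d (\<lambda>s r. if s \<noteq> [] \<and> r \<noteq> [] then W s r else 0) x"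
    proof -
      have "ms2 d (\<lambda>s r. if s \<noteq> [] \<and> r \<noteq> [] then ksgn (wdeg d s + 1) *
        ((- ksgn ((wdeg d s + 1) * (wdeg d r + 1))) * ?A r s) else 0) x =
        ms2 d (\<lambda>s r. - (if s \<noteq> [] \<and> r \<noteq> [] then W s r else 0)) x"
      proof (rule ms2_cong)
        fix s r assume s: "set s \<subseteq> set x" and r: "set r \<subseteq> set x"
        show "(if s \<noteq> [] \<and> r \<noteq> [] then ksgn (wdeg d s + 1) *
          ((- ksgn ((wdeg d s + 1) * (wdeg d r + 1))) * ?A r s) else 0) = - (if s \<noteq> [] \<and> r \<noteq> [] then W s r else 0)"
        proof (cases "s \<noteq> [] \<and> r \<noteq> []")
          case False then show ?thesis by auto
        next
          case True
          have c0: "(ksgn (wdeg d s + 1) * (- ksgn ((wdeg d s + 1) * (wdeg d r + 1)))) * ksgn ((wdeg d s + wdeg d a + 1) * wdeg d r) =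
             - (ksgn (wdeg d r * wdeg d a) :: 'a)" for a
            unfolding ksgn_neg ksgn_add[symmetric]
            by (rule ksgn_par) (simp add: even_add even_mult_iff algebra_simps)
          have "(ksgn (wdeg d s + 1) * (- ksgn ((wdeg d s + 1) * (wdeg d r + 1)))) * ?A r s = - W s r"
            unfolding W_def \<Phi>_def using A_to_W[OF li _ e c0, where k=k] s x by auto
          then show ?thesis using True by (simp add: mult.assoc)
        qed
      qed
      also have "\<dots> = - ms2 d (\<lambda>s r. if s \<noteq> [] \<and> r \<noteq> [] then W s r else 0) x"
        using ms2_scale[of d "-1"] by simp
      finally show ?thesis .
    qed
    have "ms2 d (\<lambda>s r. if s \<noteq> [] \<and> r \<noteq> [] then ksgn (wdeg d s + 1) * (?A s r
       + (- ksgn ((wdeg d s + 1) * (wdeg d r + 1))) * ?A r s) else 0) x =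
       ms2 d (\<lambda>s r. if s \<noteq> [] \<and> r \<noteq> [] then ksgn (wdeg d s + 1) * ?A s r else 0) x +
       ms2 d (\<lambda>s r. if s \<noteq> [] \<and> r \<noteq> [] then ksgn (wdeg d s + 1) *
        ((- ksgn ((wdeg d s + 1) * (wdeg d r + 1))) * ?A r s) else 0) x"
      by (subst ms2_add[symmetric]) (rule ms2_cong, simp add: distrib_left right_diff_distrib)
    then show ?thesis unfolding C1 C2 by simp
  qed
  show ?thesis unfolding LHS E S3 WA WB[symmetric] WC by (simp add: algebra_simps)
qed


lemma symf_qq: "symf d (\<lambda>e. qq d l s e j)"
  unfolding qq_def by (rule symf_prefix[OF symf_wext])

lemma deg_wext:
  assumes li: "lie_infty n d l"
  shows "\<And>s j. s \<noteq> [] \<Longrightarrow> set s \<subseteq> {..<n} \<Longrightarrow> wext d l s j \<noteq> 0 \<Longrightarrow> d j = wdeg d s + 1"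
  using wext_deg[OF li] by blast

lemma deg_qq:
  assumes li: "lie_infty n d l" and x: "set x \<subseteq> {..<n}"
  shows "\<And>s j. s \<noteq> [] \<Longrightarrow> set s \<subseteq> {..<n} \<Longrightarrow> qq d l x s j \<noteq> 0 \<Longrightarrow> d j = wdeg d s + (wdeg d x + 1)"
proof -
  fix s j assume "s \<noteq> []" "set s \<subseteq> {..<n}" "qq d l x s j \<noteq> 0"
  then have "d j = wdeg d (x @ s) + 1" using wext_deg[OF li, of "x @ s" j] x by (auto simp: qq_def)
  then show "d j = wdeg d s + (wdeg d x + 1)" by simp
qed

lemma adD_qq: "adD n d l s = coder n d (qq d l s)"
  unfolding adD_def qq_def ..

lemma MapM_coder: "MapM n d l = coder n d (wext d l)"
  unfolding MapM_def ..

lemma rejm_nil_iff: "length ms = length w \<Longrightarrow> (rejm ms w = []) = (False \<notin> set ms)"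
  unfolding rejm_def using selm_nil_iff[of "map Not ms" w] by auto

lemma sum_proper_ms2:
  "(\<Sum>I\<in>{I. I \<subseteq> {..<length x} \<and> I \<noteq> {} \<and> I \<noteq> {..<length x}}. unsh_sign d x I * G (nths x I) (nths x (- I))) =
   ms2 d (\<lambda>s r. if s \<noteq> [] \<and> r \<noteq> [] then G s r else 0) x"
proof -
  have "(\<Sum>I\<in>{I. I \<subseteq> {..<length x} \<and> I \<noteq> {} \<and> I \<noteq> {..<length x}}. unsh_sign d x I * G (nths x I) (nths x (- I))) =
    (\<Sum>ms\<in>{ms. length ms = length x \<and> (setm ms \<noteq> {} \<and> setm ms \<noteq> {..<length x})}.
      unsh_sign d x (setm ms) * G (nths x (setm ms)) (nths x (- setm ms)))"
    by (rule sum_subsets_masks)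
  also have "\<dots> = (\<Sum>ms\<in>{ms\<in>masks (length x). True \<in> set ms \<and> False \<in> set ms}. epsm d ms x * G (selm ms x) (rejm ms x))"
  proof (rule sum.cong)
    show "{ms. length ms = length x \<and> (setm ms \<noteq> {} \<and> setm ms \<noteq> {..<length x})} = {ms\<in>masks (length x). True \<in> set ms \<and> False \<in> set ms}"
    proof (rule set_eqI)
      fix ms
      show "ms \<in> {ms. length ms = length x \<and> (setm ms \<noteq> {} \<and> setm ms \<noteq> {..<length x})} \<longleftrightarrow>
        ms \<in> {ms\<in>masks (length x). True \<in> set ms \<and> False \<in> set ms}"
      proof (cases "length ms = length x")
        case True
        then have "(setm ms = {..<length x}) = (False \<notin> set ms)" using setm_full[of ms] by simp
        then show ?thesis using True setm_empty[of ms] by (auto simp: masks_def)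
      next
        case False then show ?thesis by (simp add: masks_def)
      qed
    qed
    fix ms assume "ms \<in> {ms\<in>masks (length x). True \<in> set ms \<and> False \<in> set ms}"
    then have l: "length ms = length x" by (simp add: masks_def)
    show "unsh_sign d x (setm ms) * G (nths x (setm ms)) (nths x (- setm ms)) = epsm d ms x * G (selm ms x) (rejm ms x)"
      using nths_setm[OF l] unsh_sign_setm[OF l, where 'a='a and d=d] by simp
  qed
  also have "\<dots> = (\<Sum>ms\<in>masks (length x). epsm d ms x * (if selm ms x \<noteq> [] \<and> rejm ms x \<noteq> [] then G (selm ms x) (rejm ms x) else 0))"
  proof (simp only: sum.inter_filter[OF finite_masks], rule sum.cong[OF refl])
    fix ms assume "ms \<in> masks (length x)"
    then have l: "length ms = length x" by (simp add: masks_def)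
    show "(if True \<in> set ms \<and> False \<in> set ms then epsm d ms x * G (selm ms x) (rejm ms x) else 0) =
      epsm d ms x * (if selm ms x \<noteq> [] \<and> rejm ms x \<noteq> [] then G (selm ms x) (rejm ms x) else 0)"
      using selm_nil_iff[OF l] rejm_nil_iff[OF l] by simp
  qed
  also have "\<dots> = ms2 d (\<lambda>s r. if s \<noteq> [] \<and> r \<noteq> [] then G s r else 0) x"
    by (rule ms2_masks[symmetric])
  finally show ?thesis .
qed

lemma symf_adD: "symf d (\<lambda>u. adD n d l u y m)"
  unfolding adD_qq coder_ms2
proof (rule symf_param_ms2)
  fix s r
  show "symf d (\<lambda>u. if s = [] then 0 else vprod n d (qq d l u s) r m)"
  proof (cases "s = []")
    case True then show ?thesis by (simp add: symf_def)
  next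
    case False
    have "symf d (\<lambda>u. vprod n d (qq d l u s) r m)"
      unfolding vprod_def qq_def
    proof (rule symf_sum)
      fix j
      have "symf d (\<lambda>u. mono d (j#r) m * wext d l (u @ s) j)" by (rule symf_scale[OF symf_suffix[OF symf_wext]])
      then show "symf d (\<lambda>u. wext d l (u @ s) j * mono d (j # r) m)" by (simp only: mult.commute)
    qed simp
    then show ?thesis using False by simp
  qed
qed


theorem mainTheorem2:
  fixes n :: nat and d :: "nat \<Rightarrow> int" and l :: "nat list \<Rightarrow> nat \<Rightarrow> 'a::real_normed_field"
  assumes "lie_infty n d l"
    and "valid n d x"
    and "valid n d y"
  shows "adD_el n d l (MapM n d l x) y =
     (\<lambda>m. dM n d l (adD n d l x) (wdeg d x + 1) y m
        + 1/2 * (\<Sum>I\<in>{I. I \<subseteq> {..<length x} \<and> I \<noteq> {} \<and> I \<noteq> {..<length x}}.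
             unsh_sign d x I *
             cbr (adD n d l (nths x I)) (wdeg d (nths x I) + 1)
                 (adD n d l (nths x (- I))) (wdeg d (nths x (- I)) + 1) y m))"
proof -
  note li = assms(1)
  from assms(2) have x: "x \<noteq> []" "set x \<subseteq> {..<n}" by (auto simp: valid_def)
  from assms(3) have y: "set y \<subseteq> {..<n}" by (auto simp: valid_def)
  define LHSq where "LHSq = (\<lambda>e i. ms2 d (\<lambda>s r. if s = [] then 0 else \<Sum>j<n. wext d l s j * wext d l (j # r @ e) i) x)"
  define D0 where "D0 = (\<lambda>e i. diam n d (wext d l) (qq d l x) e i + (- ksgn (1 * (wdeg d x + 1))) * diam n d (qq d l x) (wext d l) e i)"
  define Dsr where "Dsr = (\<lambda>s r e i. diam n d (qq d l s) (qq d l r) e i + (- ksgn ((wdeg d s + 1) * (wdeg d r + 1))) * diam n d (qq d l r) (qq d l s) e i)"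
  define Z where "Z = (\<lambda>e i. ms2 d (\<lambda>s r. if s \<noteq> [] \<and> r \<noteq> [] then ksgn (wdeg d s + 1) * Dsr s r e i else 0) x)"
  have L: "adD_el n d l (MapM n d l x) y m = coder n d LHSq y m" for m
  proof -
    have "adD_el n d l (MapM n d l x) y m =
      (\<Sum>u\<in>{u. coder n d (wext d l) x u \<noteq> 0}. coder n d (wext d l) x u * adD n d l u y m)"
      unfolding adD_el_def MapM_coder ..
    also have "\<dots> = ms2 d (\<lambda>s r'. if s = [] then 0 else \<Sum>j<n. wext d l s j * adD n d l (j#r') y m) x"
      by (rule lin_coder_expand[OF symf_adD])
    also have "\<dots> = ms2 d (\<lambda>s r. coder n d (\<lambda>e i. if s = [] then 0 else \<Sum>j<n. wext d l s j * wext d l (j # r @ e) i) y m) x"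
    proof (rule ms2_cong)
      fix s r
      show "(if s = [] then 0 else \<Sum>j<n. wext d l s j * adD n d l (j#r) y m) =
        coder n d (\<lambda>e i. if s = [] then 0 else \<Sum>j<n. wext d l s j * wext d l (j # r @ e) i) y m"
      proof (cases "s = []")
        case True then show ?thesis by (simp add: coder_zero)
      next
        case False
        have "coder n d (\<lambda>e i. \<Sum>j<n. wext d l s j * wext d l (j # r @ e) i) y m =
          (\<Sum>j<n. coder n d (\<lambda>e i. wext d l s j * wext d l (j # r @ e) i) y m)"
          by (rule coder_sum) simp
        also have "\<dots> = (\<Sum>j<n. wext d l s j * adD n d l (j#r) y m)"
          by (rule sum.cong[OF refl]) (simp add: coder_scale adD_def)
        finally show ?thesis using False by simp
      qed
    qed
    also have "\<dots> = coder n d LHSq y m"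
      unfolding LHSq_def by (rule coder_ms2_param[symmetric])
    finally show ?thesis .
  qed
  have R1: "dM n d l (adD n d l x) (wdeg d x + 1) y m = (-1) * coder n d D0 y m" for m
  proof -
    have C: "comp (coder n d (wext d l)) (coder n d (qq d l x)) y m - ksgn (1 * (wdeg d x + 1)) * comp (coder n d (qq d l x)) (coder n d (wext d l)) y m =
      coder n d D0 y m"
      unfolding D0_def by (rule comm_lemma[OF symf_wext symf_qq deg_qq[OF li x(2)] deg_wext[OF li] y])
    show ?thesis unfolding dM_def MapM_coder adD_qq C[symmetric] by simp
  qed
  have R2: "(\<Sum>I\<in>{I. I \<subseteq> {..<length x} \<and> I \<noteq> {} \<and> I \<noteq> {..<length x}}.
             unsh_sign d x I *
             cbr (adD n d l (nths x I)) (wdeg d (nths x I) + 1)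
                 (adD n d l (nths x (- I))) (wdeg d (nths x (- I)) + 1) y m) = coder n d Z y m" for m
  proof -
    have "(\<Sum>I\<in>{I. I \<subseteq> {..<length x} \<and> I \<noteq> {} \<and> I \<noteq> {..<length x}}.
             unsh_sign d x I *
             cbr (adD n d l (nths x I)) (wdeg d (nths x I) + 1)
                 (adD n d l (nths x (- I))) (wdeg d (nths x (- I)) + 1) y m) =
       ms2 d (\<lambda>s r. if s \<noteq> [] \<and> r \<noteq> [] then cbr (adD n d l s) (wdeg d s + 1) (adD n d l r) (wdeg d r + 1) y m else 0) x"
      by (rule sum_proper_ms2)
    also have "\<dots> = ms2 d (\<lambda>s r. coder n d (\<lambda>e i. if s \<noteq> [] \<and> r \<noteq> [] then ksgn (wdeg d s + 1) * Dsr s r e i else 0) y m) x"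
    proof (rule ms2_cong)
      fix s r assume s: "set s \<subseteq> set x" and r: "set r \<subseteq> set x"
      show "(if s \<noteq> [] \<and> r \<noteq> [] then cbr (adD n d l s) (wdeg d s + 1) (adD n d l r) (wdeg d r + 1) y m else 0) =
        coder n d (\<lambda>e i. if s \<noteq> [] \<and> r \<noteq> [] then ksgn (wdeg d s + 1) * Dsr s r e i else 0) y m"
      proof (cases "s \<noteq> [] \<and> r \<noteq> []")
        case False
        then have z: "(\<lambda>e i. if s \<noteq> [] \<and> r \<noteq> [] then ksgn (wdeg d s + 1) * Dsr s r e i else 0) = (\<lambda>e i. 0)" by auto
        have "\<not> (s \<noteq> [] \<and> r \<noteq> [])" using False by simp
        then show ?thesis unfolding z by (simp only: if_False coder_zero)
      next
        case True
        have sx: "set s \<subseteq> {..<n}" "set r \<subseteq> {..<n}" using s r x by auto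
        have C: "comp (coder n d (qq d l s)) (coder n d (qq d l r)) y m -
            ksgn ((wdeg d s + 1) * (wdeg d r + 1)) * comp (coder n d (qq d l r)) (coder n d (qq d l s)) y m =
          coder n d (Dsr s r) y m"
          unfolding Dsr_def by (rule comm_lemma[OF symf_qq symf_qq deg_qq[OF li sx(2)] deg_qq[OF li sx(1)] y])
        show ?thesis using True unfolding cbr_def adD_qq C by (simp add: coder_scale)
      qed
    qed
    also have "\<dots> = coder n d Z y m"
      unfolding Z_def by (rule coder_ms2_param[symmetric])
    finally show ?thesis .
  qed
  have F: "coder n d LHSq y m = coder n d (\<lambda>e i. (-1) * D0 e i + 1/2 * Z e i) y m" for m
  proof (rule coder_cong)
    fix e i assume e: "e \<noteq> []" "set e \<subseteq> set y" and i: "i < n"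
    have "set e \<subseteq> {..<n}" using e y by auto
    then show "LHSq e i = (-1) * D0 e i + 1/2 * Z e i"
      unfolding LHSq_def D0_def Z_def Dsr_def by (rule single[OF li x _ i])
  qed
  show ?thesis
  proof (rule ext)
    fix m
    have "adD_el n d l (MapM n d l x) y m = coder n d (\<lambda>e i. (-1) * D0 e i + 1/2 * Z e i) y m"
      unfolding L F ..
    also have "\<dots> = (-1) * coder n d D0 y m + 1/2 * coder n d Z y m"
      by (simp only: coder_lin coder_scale)
    finally show "adD_el n d l (MapM n d l x) y m = dM n d l (adD n d l x) (wdeg d x + 1) y m
        + 1/2 * (\<Sum>I\<in>{I. I \<subseteq> {..<length x} \<and> I \<noteq> {} \<and> I \<noteq> {..<length x}}.
             unsh_sign d x I *
             cbr (adD n d l (nths x I)) (wdeg d (nths x I) + 1)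
                 (adD n d l (nths x (- I))) (wdeg d (nths x (- I)) + 1) y m)"
      unfolding R1 R2 .
  qed
qed


end
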